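(* Let $0<\alpha<\gamma<1$, $f\in C^1[0,1]$ with $f(0)=0$, $h=\dot f$, $D\in C^1[0,1]$ with $D>0$ on $(0,\alpha)$ and $D<0$ on $(\alpha,1)$, $g\in C^0[0,1]$ with $g<0$ on $(0,\gamma)$, $g>0$ on $(\gamma,1)$, $g(0)=g(\gamma)=g(1)=0$, $q=Dg$. For $c\in\mathbb R$ consider problem (P3): find $z\in C^0[\alpha,1]\cap C^1(\alpha,1)$ with $\dot z=h-c-q/z$ and $z>0$ on $(\alpha,1)$, $z(\alpha)=z(1)=0$. If $c^*_{3.2}<c^*_{3.1}$ and $c^*_{3.2}<c<c^*_{3.1}$, then (P3) has solutions; more precisely, with $\beta(c):=\min\{\beta_1(c),\beta_2(c)\}$, for every $s\in(0,\beta(c)]$ there is a solution $z_s$ of (P3) with $z_s(\gamma)=s$, giving a one-parameter family $\{z_s:s\in(0,\beta(c)]\}$ of solutions. Conversely, if (P3) has a solution for some $c$, then $c^*_{3.2}\le c^*_{3.1}$ and $c^*_{3.2}\le c\le c^*_{3.1}$.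
   Context: Threshold $c^*$: for $\sigma_1<\sigma_2$ and $H,Q$ continuous on $[\sigma_1,\sigma_2]$ with $Q>0$ on $(\sigma_1,\sigma_2)$, $Q(\sigma_1)=Q(\sigma_2)=0$, and every $c$, let $\zeta_c\in C^0[\sigma_1,\sigma_2]\cap C^1(\sigma_1,\sigma_2)$ be the unique function with $\dot\zeta_c=H-c-Q/\zeta_c$, $\zeta_c<0$ on $(\sigma_1,\sigma_2)$, $\zeta_c(\sigma_2)=0$; $c^*(Q;H;\sigma_1,\sigma_2):=\sup\{c:\zeta_c(\sigma_1)<0\}\in(-\infty,\infty]$. With $\tilde q(\phi)=-q(1-\phi)$ and $\bar h(\phi)=h(1-\phi)$: $c^*_{3.1}:=-c^*(q;-h;\alpha,\gamma)$, $c^*_{3.2}:=c^*(\tilde q;\bar h;0,1-\gamma)$. For $c^*_{3.2}<c<c^*_{3.1}$: the set of values $z_1(\gamma)$ over solutions $z_1\in C^0[\alpha,\gamma]\cap C^1(\alpha,\gamma)$ of $\dot z_1=h-c-q/z_1$, $z_1>0$ on $(\alpha,\gamma)$, $z_1(\alpha)=0$ is an interval $(0,\beta_1(c)]$ with $\beta_1(c)>0$ (each value attained by exactly one solution); likewise the set of values $z_2(\gamma)$ over solutions $z_2\in C^0[\gamma,1]\cap C^1(\gamma,1)$ of $\dot z_2=h-c-q/z_2$, $z_2>0$ on $(\gamma,1)$, $z_2(1)=0$ is an interval $(0,\beta_2(c)]$ with $\beta_2(c)>0$. *)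

theory Defs
  imports "HOL-Analysis.Analysis"
begin

definition C1_on :: "real set \<Rightarrow> (real \<Rightarrow> real) \<Rightarrow> bool" where
  "C1_on S z \<longleftrightarrow> (\<forall>x\<in>S. z differentiable (at x)) \<and> continuous_on S (deriv z)"

definition zeta_sol :: "(real \<Rightarrow> real) \<Rightarrow> (real \<Rightarrow> real) \<Rightarrow> real \<Rightarrow> real \<Rightarrow> real \<Rightarrow> (real \<Rightarrow> real) \<Rightarrow> bool" where
  "zeta_sol Q H s1 s2 c \<zeta> \<longleftrightarrow>
     continuous_on {s1..s2} \<zeta> \<and> C1_on {s1<..<s2} \<zeta> \<and>
     (\<forall>x\<in>{s1<..<s2}. deriv \<zeta> x = H x - c - Q x / \<zeta> x \<and> \<zeta> x < 0) \<and> \<zeta> s2 = 0"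

text \<open>Threshold c*(Q;H;s1,s2) = sup {c. zeta_c(s1) < 0}, valued in the extended reals.
  (zeta_c is unique by the standing context, so "the solution" = "some solution".)\<close>
definition cstar :: "(real \<Rightarrow> real) \<Rightarrow> (real \<Rightarrow> real) \<Rightarrow> real \<Rightarrow> real \<Rightarrow> ereal" where
  "cstar Q H s1 s2 = Sup {ereal c | c. \<exists>\<zeta>. zeta_sol Q H s1 s2 c \<zeta> \<and> \<zeta> s1 < 0}"

definition cstar31 :: "(real \<Rightarrow> real) \<Rightarrow> (real \<Rightarrow> real) \<Rightarrow> real \<Rightarrow> real \<Rightarrow> ereal" where
  "cstar31 q h \<alpha> \<gamma> = - cstar q (\<lambda>x. - h x) \<alpha> \<gamma>"

definition cstar32 :: "(real \<Rightarrow> real) \<Rightarrow> (real \<Rightarrow> real) \<Rightarrow> real \<Rightarrow> ereal" where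
  "cstar32 q h \<gamma> = cstar (\<lambda>\<phi>. - q (1 - \<phi>)) (\<lambda>\<phi>. h (1 - \<phi>)) 0 (1 - \<gamma>)"

definition pos_sol_on :: "(real \<Rightarrow> real) \<Rightarrow> (real \<Rightarrow> real) \<Rightarrow> real \<Rightarrow> real \<Rightarrow> real \<Rightarrow> (real \<Rightarrow> real) \<Rightarrow> bool" where
  "pos_sol_on q h c a b z \<longleftrightarrow>
     continuous_on {a..b} z \<and> C1_on {a<..<b} z \<and>
     (\<forall>x\<in>{a<..<b}. deriv z x = h x - c - q x / z x \<and> z x > 0)"

definition P3 :: "(real \<Rightarrow> real) \<Rightarrow> (real \<Rightarrow> real) \<Rightarrow> real \<Rightarrow> real \<Rightarrow> (real \<Rightarrow> real) \<Rightarrow> bool" where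
  "P3 q h \<alpha> c z \<longleftrightarrow> pos_sol_on q h c \<alpha> 1 z \<and> z \<alpha> = 0 \<and> z 1 = 0"

definition beta1 :: "(real \<Rightarrow> real) \<Rightarrow> (real \<Rightarrow> real) \<Rightarrow> real \<Rightarrow> real \<Rightarrow> real \<Rightarrow> real" where
  "beta1 q h \<alpha> \<gamma> c = Sup {z \<gamma> | z. pos_sol_on q h c \<alpha> \<gamma> z \<and> z \<alpha> = 0}"

definition beta2 :: "(real \<Rightarrow> real) \<Rightarrow> (real \<Rightarrow> real) \<Rightarrow> real \<Rightarrow> real \<Rightarrow> real" where
  "beta2 q h \<gamma> c = Sup {z \<gamma> | z. pos_sol_on q h c \<gamma> 1 z \<and> z 1 = 0}"

end

theory Submission
  imports Defs
begin

lemma comp_cont2: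
  fixes G :: "real \<Rightarrow> real \<Rightarrow> real"
  assumes Gc: "continuous_on ({p..r} \<times> UNIV) (\<lambda>xy. G (fst xy) (snd xy))"
    and yc: "continuous_on {p..r} y"
  shows "continuous_on {p..r} (\<lambda>t. G t (y t))"
proof -
  have "continuous_on {p..r} (\<lambda>t. (t, y t))"
    by (intro continuous_intros yc)
  moreover have "(\<lambda>t. (t, y t)) ` {p..r} \<subseteq> {p..r} \<times> UNIV" by auto
  ultimately have "continuous_on {p..r} ((\<lambda>xy. G (fst xy) (snd xy)) \<circ> (\<lambda>t. (t, y t)))"
    using continuous_on_compose continuous_on_subset Gc by blast
  then show ?thesis by (simp add: o_def)
qed

lemma exp_integral_bound:
  fixes L B x r :: real
  assumes "x \<le> r" "0 < L"
  shows "integral {x..r} (\<lambda>t. L * B * exp (2*L*(r-t))) = B/2 * (exp (2*L*(r-x)) - 1)"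
proof -
  have "((\<lambda>t. L * B * exp (2*L*(r-t))) has_integral ((\<lambda>t. -(B/2) * exp (2*L*(r-t))) r - (\<lambda>t. -(B/2) * exp (2*L*(r-t))) x)) {x..r}"
  proof (rule fundamental_theorem_of_calculus[OF assms(1)])
    fix t assume "t \<in> {x..r}"
    have "((\<lambda>t. -(B/2) * exp (2*L*(r-t))) has_real_derivative (L * B * exp (2*L*(r-t)))) (at t within {x..r})"
      by (rule derivative_eq_intros refl | simp add: field_simps)+
    then show "((\<lambda>t. -(B/2) * exp (2*L*(r-t))) has_vector_derivative L * B * exp (2*L*(r-t))) (at t within {x..r})"
      by (simp only: has_real_derivative_iff_has_vector_derivative)
  qed
  then have "integral {x..r} (\<lambda>t. L * B * exp (2*L*(r-t))) = -(B/2) * exp (2*L*(r-r)) - -(B/2) * exp (2*L*(r-x))"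
    by (rule integral_unique)
  then show ?thesis by (simp add: algebra_simps)
qed

lemma picard_back:
  fixes G :: "real \<Rightarrow> real \<Rightarrow> real" and p r y0 L :: real
  assumes pr: "p < r" and Gc: "continuous_on ({p..r} \<times> UNIV) (\<lambda>xy. G (fst xy) (snd xy))"
    and L: "0 < L" and Lip: "\<And>x u v. x \<in> {p..r} \<Longrightarrow> \<bar>G x u - G x v\<bar> \<le> L * \<bar>u - v\<bar>"
  shows "\<exists>y. continuous_on {p..r} y \<and> y r = y0 \<and>
           (\<forall>x\<in>{p..r}. (y has_real_derivative G x (y x)) (at x within {p..r}))"
proof -
  define T where "T y = (\<lambda>x. y0 - integral {x..r} (\<lambda>t. G t (y t)))" for y :: "real \<Rightarrow> real"
  have gc: "continuous_on {p..r} (\<lambda>t. G t (y t))" if "continuous_on {p..r} y" for y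
    using comp_cont2[OF Gc that] .
  have gi: "(\<lambda>t. G t (y t)) integrable_on {x..r}" if "continuous_on {p..r} y" "x \<in> {p..r}" for y x
    by (rule integrable_continuous_interval, rule continuous_on_subset[OF gc[OF that(1)]]) (use that in auto)
  have Tc: "continuous_on {p..r} (T y)" if "continuous_on {p..r} y" for y
  proof -
    have "continuous_on {p..r} (\<lambda>x. integral {x..r} (\<lambda>t. G t (y t)))"
      by (rule indefinite_integral_continuous_1'[OF integrable_continuous_interval[OF gc[OF that]]])
    then show ?thesis unfolding T_def by (intro continuous_intros)
  qed
  have Tdiff: "\<bar>T y1 x - T y2 x\<bar> = \<bar>integral {x..r} (\<lambda>t. G t (y1 t) - G t (y2 t))\<bar>"
    if "continuous_on {p..r} y1" "continuous_on {p..r} y2" "x \<in> {p..r}" for y1 y2 x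
  proof -
    have "integral {x..r} (\<lambda>t. G t (y1 t) - G t (y2 t)) = integral {x..r} (\<lambda>t. G t (y1 t)) - integral {x..r} (\<lambda>t. G t (y2 t))"
      by (rule integral_diff[OF gi gi]) (use that in auto)
    then show ?thesis unfolding T_def by simp
  qed
  have bound_w: "\<bar>T y1 x - T y2 x\<bar> \<le> B/2 * exp (2*L*(r-x))"
    if c1: "continuous_on {p..r} y1" and c2: "continuous_on {p..r} y2" and x: "x \<in> {p..r}" and B: "0 \<le> B"
      and hb: "\<forall>t\<in>{p..r}. \<bar>y1 t - y2 t\<bar> \<le> B * exp (2*L*(r-t))" for y1 y2 x B
  proof -
    have "\<bar>integral {x..r} (\<lambda>t. G t (y1 t) - G t (y2 t))\<bar> \<le> integral {x..r} (\<lambda>t. L * B * exp (2*L*(r-t)))"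
    proof -
      have "norm (integral {x..r} (\<lambda>t. G t (y1 t) - G t (y2 t))) \<le> integral {x..r} (\<lambda>t. L * B * exp (2*L*(r-t)))"
      proof (rule integral_norm_bound_integral)
        show "(\<lambda>t. G t (y1 t) - G t (y2 t)) integrable_on {x..r}"
          by (rule integrable_diff[OF gi gi]) (use that in auto)
        show "(\<lambda>t. L * B * exp (2*L*(r-t))) integrable_on {x..r}"
          by (rule integrable_continuous_interval) (intro continuous_intros)
        fix t assume t: "t \<in> {x..r}"
        then have tp: "t \<in> {p..r}" using x by auto
        have "\<bar>G t (y1 t) - G t (y2 t)\<bar> \<le> L * \<bar>y1 t - y2 t\<bar>" using Lip[OF tp] .
        also have "\<dots> \<le> L * (B * exp (2*L*(r-t)))" using hb tp L by (intro mult_left_mono) auto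
        finally show "norm (G t (y1 t) - G t (y2 t)) \<le> L * B * exp (2*L*(r-t))" by simp
      qed
      then show ?thesis by simp
    qed
    also have "\<dots> = B/2 * (exp (2*L*(r-x)) - 1)" using exp_integral_bound[of x r L B] x L by auto
    also have "\<dots> \<le> B/2 * exp (2*L*(r-x))" using B by (simp add: mult_left_mono)
    finally show ?thesis using Tdiff[OF c1 c2 x] by simp
  qed
  have bound_c: "\<bar>T y1 x - T y2 x\<bar> \<le> L * c * (r - p)"
    if c1: "continuous_on {p..r} y1" and c2: "continuous_on {p..r} y2" and x: "x \<in> {p..r}" and c: "0 \<le> c"
      and hb: "\<forall>t\<in>{p..r}. \<bar>y1 t - y2 t\<bar> \<le> c" for y1 y2 x c
  proof -
    have "norm (integral {x..r} (\<lambda>t. G t (y1 t) - G t (y2 t))) \<le> integral {x..r} (\<lambda>t. L * c)"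
    proof (rule integral_norm_bound_integral)
      show "(\<lambda>t. G t (y1 t) - G t (y2 t)) integrable_on {x..r}"
        by (rule integrable_diff[OF gi gi]) (use that in auto)
      show "(\<lambda>t. L * c) integrable_on {x..r}" by (rule integrable_continuous_interval) (intro continuous_intros)
      fix t assume t: "t \<in> {x..r}"
      then have tp: "t \<in> {p..r}" using x by auto
      have "\<bar>G t (y1 t) - G t (y2 t)\<bar> \<le> L * \<bar>y1 t - y2 t\<bar>" using Lip[OF tp] .
      also have "\<dots> \<le> L * c" using hb tp L by (intro mult_left_mono) auto
      finally show "norm (G t (y1 t) - G t (y2 t)) \<le> L * c" by simp
    qed
    also have "\<dots> = (r - x) * (L * c)" using x by simp
    also have "\<dots> \<le> (r - p) * (L * c)" using x L c by (intro mult_right_mono) auto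
    finally show ?thesis using Tdiff[OF c1 c2 x] by (simp add: algebra_simps)
  qed
  define Y where "Y n = (T ^^ n) (\<lambda>_. y0)" for n
  have YS: "Y (Suc n) = T (Y n)" for n unfolding Y_def by simp
  have Yc: "continuous_on {p..r} (Y n)" for n
    by (induction n) (auto simp: Y_def Tc)
  obtain M0 where M0: "\<forall>t\<in>{p..r}. \<bar>G t y0\<bar> \<le> M0"
    using compact_imp_bounded[OF compact_continuous_image[OF gc[of "\<lambda>_. y0"] compact_Icc]]
    unfolding bounded_iff by auto
  have M0pos: "0 \<le> M0" using M0 pr by force
  define B0 where "B0 = M0 * (r - p)"
  have B0pos: "0 \<le> B0" using M0pos pr by (simp add: B0_def)
  have Y10: "\<bar>Y 1 x - Y 0 x\<bar> \<le> B0 * exp (2*L*(r-x))" if x: "x \<in> {p..r}" for x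
  proof -
    have "norm (integral {x..r} (\<lambda>t. G t y0)) \<le> integral {x..r} (\<lambda>t. M0)"
      by (rule integral_norm_bound_integral) (use gi[of "\<lambda>_. y0" x] x M0 in auto)
    also have "\<dots> = (r - x) * M0" using x by simp
    also have "\<dots> \<le> (r - p) * M0" using x M0pos by (intro mult_right_mono) auto
    also have "\<dots> = B0" unfolding B0_def by simp
    also have "\<dots> \<le> B0 * exp (2*L*(r-x))" using B0pos x L by (simp add: mult_le_cancel_left1)
    finally show ?thesis by (simp add: Y_def T_def)
  qed
  have Ystep: "\<forall>x\<in>{p..r}. \<bar>Y (Suc n) x - Y n x\<bar> \<le> B0 / 2^n * exp (2*L*(r-x))" for n
  proof (induction n)
    case 0 then show ?case using Y10 by simp
  next
    case (Suc n)
    show ?case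
    proof
      fix x assume x: "x \<in> {p..r}"
      have "\<bar>T (Y (Suc n)) x - T (Y n) x\<bar> \<le> (B0 / 2^n)/2 * exp (2*L*(r-x))"
        by (rule bound_w[OF Yc Yc x]) (use Suc B0pos in auto)
      then show "\<bar>Y (Suc (Suc n)) x - Y (Suc n) x\<bar> \<le> B0 / 2 ^ Suc n * exp (2*L*(r-x))"
        by (simp add: YS)
    qed
  qed
  define E where "E = exp (2*L*(r-p))"
  have Ystep2: "\<bar>Y (Suc n) x - Y n x\<bar> \<le> B0 * E / 2^n" if x: "x \<in> {p..r}" for n x
  proof -
    have "exp (2*L*(r-x)) \<le> E" unfolding E_def using x L by auto
    then have "B0 / 2^n * exp (2*L*(r-x)) \<le> B0 / 2^n * E" using B0pos by (intro mult_left_mono) auto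
    moreover have "\<bar>Y (Suc n) x - Y n x\<bar> \<le> B0 / 2^n * exp (2*L*(r-x))" using Ystep[of n] x by blast
    ultimately show ?thesis by simp
  qed
  have Ycauchy: "\<bar>Y (n+k) x - Y n x\<bar> \<le> 2 * B0 * E * (1/2^n - 1/2^(n+k))" if x: "x \<in> {p..r}" for n k x
  proof (induction k)
    case 0 then show ?case by simp
  next
    case (Suc k)
    have "\<bar>Y (n + Suc k) x - Y n x\<bar> \<le> \<bar>Y (Suc (n+k)) x - Y (n+k) x\<bar> + \<bar>Y (n+k) x - Y n x\<bar>" by simp
    also have "\<dots> \<le> B0 * E / 2^(n+k) + 2 * B0 * E * (1/2^n - 1/2^(n+k))"
      using Ystep2[OF x, of "n+k"] Suc by linarith
    also have "\<dots> = 2 * B0 * E * (1/2^n - 1/2^(n + Suc k))" by (simp add: field_simps)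
    finally show ?case .
  qed
  have Ycauchy2: "\<bar>Y m x - Y n x\<bar> \<le> 2 * B0 * E / 2^n" if x: "x \<in> {p..r}" and "n \<le> m" for n m x
  proof -
    obtain k where m: "m = n + k" using \<open>n \<le> m\<close> le_Suc_ex by blast
    have "2 * B0 * E * (1/2^n - 1/2^(n+k)) \<le> 2 * B0 * E * (1/2^n)"
      using B0pos by (intro mult_left_mono) (auto simp: E_def)
    then show ?thesis using Ycauchy[OF x, of n k] m by simp
  qed
  have lim0: "(\<lambda>n. 2 * B0 * E / 2^n) \<longlonglongrightarrow> 0"
  proof -
    have "(\<lambda>n. (2 * B0 * E) * (1/2)^n) \<longlonglongrightarrow> (2*B0*E) * 0"
      by (intro tendsto_mult tendsto_const LIMSEQ_power_zero) auto
    then show ?thesis by (simp only: power_one_over times_divide_eq_right mult_1_right mult_zero_right)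
  qed
  have lim0': "\<exists>N. \<forall>n\<ge>N. 2 * B0 * E / 2^n < e" if e: "0 < e" for e
  proof -
    obtain N where N: "\<forall>n\<ge>N. dist (2 * B0 * E / 2^n) 0 < e" using lim0 e unfolding LIMSEQ_def by blast
    have "\<forall>n\<ge>N. 2 * B0 * E / 2^n < e"
    proof (intro allI impI)
      fix n assume "N \<le> n"
      then have "dist (2 * B0 * E / 2^n) 0 < e" using N by blast
      then show "2 * B0 * E / 2^n < e" unfolding dist_real_def diff_zero using abs_ge_self le_less_trans by blast
    qed
    then show ?thesis by blast
  qed
  have conv: "convergent (\<lambda>n. Y n x)" if x: "x \<in> {p..r}" for x
  proof -
    have "Cauchy (\<lambda>n. Y n x)"
    proof (rule metric_CauchyI)
      fix e :: real assume e: "0 < e"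
      obtain N where N: "\<forall>n\<ge>N. 2 * B0 * E / 2^n < e/2"
        using lim0'[of "e/2"] e by auto
      show "\<exists>M. \<forall>m\<ge>M. \<forall>n\<ge>M. dist (Y m x) (Y n x) < e"
      proof (intro exI allI impI)
        fix m n assume mn: "N \<le> m" "N \<le> n"
        have "\<bar>Y m x - Y N x\<bar> \<le> 2 * B0 * E / 2^N" "\<bar>Y n x - Y N x\<bar> \<le> 2 * B0 * E / 2^N"
          using Ycauchy2[OF x] mn by auto
        moreover have "2 * B0 * E / 2^N < e/2" using N by auto
        ultimately show "dist (Y m x) (Y n x) < e" by (simp add: dist_real_def)
      qed
    qed
    then show ?thesis using Cauchy_convergent_iff by blast
  qed
  define y where "y x = lim (\<lambda>n. Y n x)" for x
  have Ylim: "(\<lambda>n. Y n x) \<longlonglongrightarrow> y x" if "x \<in> {p..r}" for x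
    using conv[OF that] unfolding y_def convergent_LIMSEQ_iff .
  have Ybound: "\<bar>Y n x - y x\<bar> \<le> 2 * B0 * E / 2^n" if x: "x \<in> {p..r}" for n x
  proof -
    have "(\<lambda>m. \<bar>Y m x - Y n x\<bar>) \<longlonglongrightarrow> \<bar>y x - Y n x\<bar>"
      by (intro tendsto_intros Ylim[OF x])
    moreover have "\<forall>\<^sub>F m in sequentially. \<bar>Y m x - Y n x\<bar> \<le> 2 * B0 * E / 2^n"
      using Ycauchy2[OF x] eventually_sequentially by blast
    ultimately have "\<bar>y x - Y n x\<bar> \<le> 2 * B0 * E / 2^n"
      by (rule tendsto_upperbound) simp
    then show ?thesis by linarith
  qed
  have ul: "uniform_limit {p..r} Y y sequentially"
    unfolding uniform_limit_iff
  proof (intro allI impI)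
    fix e :: real assume e: "0 < e"
    obtain N where N: "\<forall>n\<ge>N. 2 * B0 * E / 2^n < e"
      using lim0'[of e] e by auto
    show "\<forall>\<^sub>F n in sequentially. \<forall>x\<in>{p..r}. dist (Y n x) (y x) < e"
      unfolding eventually_sequentially
    proof (intro exI allI impI ballI)
      fix n x assume "N \<le> n" "x \<in> {p..r}"
      then show "dist (Y n x) (y x) < e" using Ybound[of x n] N by (force simp: dist_real_def)
    qed
  qed
  have yc: "continuous_on {p..r} y"
    by (rule uniform_limit_theorem[OF _ ul]) (auto simp: Yc)
  have fixp: "T y x = y x" if x: "x \<in> {p..r}" for x
  proof -
    have "(\<lambda>n. Y (Suc n) x) \<longlonglongrightarrow> y x" using Ylim[OF x] by (rule LIMSEQ_Suc)
    moreover have "(\<lambda>n. Y (Suc n) x) \<longlonglongrightarrow> T y x"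
    proof -
      have "(\<lambda>n. Y (Suc n) x - T y x) \<longlonglongrightarrow> 0"
      proof (rule Lim_null_comparison)
        show "\<forall>\<^sub>F n in sequentially. norm (Y (Suc n) x - T y x) \<le> L * (2 * B0 * E / 2^n) * (r - p)"
        proof (rule always_eventually, rule allI)
          fix n
          have "\<bar>T (Y n) x - T y x\<bar> \<le> L * (2 * B0 * E / 2^n) * (r - p)"
            by (rule bound_c[OF Yc yc x]) (use Ybound B0pos in \<open>auto simp: E_def\<close>)
          then show "norm (Y (Suc n) x - T y x) \<le> L * (2 * B0 * E / 2^n) * (r - p)" by (simp add: YS)
        qed
        show "(\<lambda>n. L * (2 * B0 * E / 2^n) * (r - p)) \<longlonglongrightarrow> 0"
          using tendsto_mult[OF tendsto_mult[OF tendsto_const lim0] tendsto_const, of L "r-p"] by simp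
      qed
      then have "(\<lambda>n. Y (Suc n) x - T y x + T y x) \<longlonglongrightarrow> 0 + T y x"
        by (intro tendsto_add tendsto_const)
      then show ?thesis by simp
    qed
    ultimately show ?thesis using LIMSEQ_unique by metis
  qed
  have deriv: "(y has_real_derivative G x (y x)) (at x within {p..r})" if x: "x \<in> {p..r}" for x
  proof -
    have "((\<lambda>x. integral {x..r} (\<lambda>t. G t (y t))) has_real_derivative - G x (y x)) (at x within {p..r})"
      by (rule integral_has_real_derivative'[OF gc[OF yc] x])
    then have "(T y has_real_derivative G x (y x)) (at x within {p..r})"
      unfolding T_def using DERIV_diff[OF DERIV_const[of y0]] by (auto intro!: derivative_eq_intros)
    then show ?thesis
      by (rule has_field_derivative_transform_within[where d=1]) (use x fixp in auto)
  qed
  have "y r = y0" using fixp[of r] pr by (simp add: T_def)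
  then show ?thesis using yc deriv by blast
qed


lemma first_exit:
  fixes u v u' :: "real \<Rightarrow> real"
  assumes pr: "p \<le> r" and uc: "continuous_on {p..r} u" and vc: "continuous_on {p..r} v"
    and ud: "\<And>x. x \<in> {p<..<r} \<Longrightarrow> (u has_real_derivative u' x) (at x)"
    and sg: "\<And>x. x \<in> {p<..<r} \<Longrightarrow> v x < \<theta> \<Longrightarrow> u' x \<le> 0"
    and bd: "\<And>x. x \<in> {p..r} \<Longrightarrow> u x \<le> u p \<Longrightarrow> v x < \<theta>"
  shows "\<forall>x\<in>{p..r}. u x \<le> u p"
proof (rule ballI, rule ccontr)
  fix x assume x: "x \<in> {p..r}" and nx: "\<not> u x \<le> u p"
  have vp: "v p < \<theta>" using bd[of p] pr by auto
  define T where "T = {y \<in> {p..x}. \<theta> \<le> v y}"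
  have dec: "u p \<ge> u z" if z: "z \<in> {p..x}" and lt: "\<forall>y\<in>{p..<z}. v y < \<theta>" for z
  proof (rule DERIV_nonpos_imp_decreasing_open[of p z u])
    show "p \<le> z" using z by auto
    show "continuous_on {p..z} u" using continuous_on_subset[OF uc] z x by auto
    fix y assume y: "p < y" "y < z"
    then have "y \<in> {p<..<r}" using z x by auto
    then show "\<exists>d. DERIV u y :> d \<and> d \<le> 0" using ud sg lt y by fastforce
  qed
  show False
  proof (cases "T = {}")
    case True
    have "\<forall>y\<in>{p..<x}. v y < \<theta>"
    proof
      fix y assume y: "y \<in> {p..<x}"
      then have "y \<notin> T" using True by auto
      then show "v y < \<theta>" using y unfolding T_def by auto
    qed
    then show False using dec[of x] x nx by auto
  next
    case False
    have cT: "closed T"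
    proof -
      have "T = {p..x} \<inter> v -` {\<theta>..}" unfolding T_def by auto
      moreover have "closed ({p..x} \<inter> v -` {\<theta>..})"
        by (rule continuous_closed_preimage) (use continuous_on_subset[OF vc] x in auto)
      ultimately show ?thesis by simp
    qed
    have bT: "bdd_below T" unfolding T_def by (rule bdd_belowI[of _ p]) auto
    define x1 where "x1 = Inf T"
    have x1T: "x1 \<in> T" unfolding x1_def by (rule closed_contains_Inf[OF False bT cT])
    have lt: "\<forall>y\<in>{p..<x1}. v y < \<theta>"
    proof
      fix y assume y: "y \<in> {p..<x1}"
      have "x1 \<le> x" using x1T T_def by auto
      then have "y \<in> {p..x}" using y by auto
      moreover have "y \<notin> T" using y cInf_lower[OF _ bT] x1_def by force
      ultimately show "v y < \<theta>" unfolding T_def by auto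
    qed
    have x1px: "x1 \<in> {p..x}" using x1T T_def by auto
    have "u p \<ge> u x1" using dec[OF x1px lt] .
    then have "v x1 < \<theta>" using bd[of x1] x1px x by auto
    then show False using x1T T_def by auto
  qed
qed

lemma first_exit_strict:
  fixes u u' :: "real \<Rightarrow> real"
  assumes pr: "p \<le> r" and uc: "continuous_on {p..r} u"
    and ud: "\<And>x. x \<in> {p..<r} \<Longrightarrow> (u has_real_derivative u' x) (at x)"
    and sg: "\<And>x. x \<in> {p..<r} \<Longrightarrow> P x \<Longrightarrow> u' x < 0"
    and bd: "\<And>x. x \<in> {p..r} \<Longrightarrow> u x \<le> u p \<Longrightarrow> P x"
  shows "\<forall>x\<in>{p..r}. u x \<le> u p"
proof (rule ballI, rule ccontr)
  fix x assume x: "x \<in> {p..r}" and nx: "\<not> u x \<le> u p"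
  define T where "T = {y \<in> {p..x}. u y \<le> u p}"
  have cT: "closed T"
  proof -
    have "T = {p..x} \<inter> u -` {..u p}" unfolding T_def by auto
    moreover have "closed ({p..x} \<inter> u -` {..u p})"
      by (rule continuous_closed_preimage) (use continuous_on_subset[OF uc] x in auto)
    ultimately show ?thesis by simp
  qed
  have ne: "T \<noteq> {}" using x unfolding T_def by auto
  have bT: "bdd_above T" unfolding T_def by (rule bdd_aboveI[of _ x]) auto
  define x1 where "x1 = Sup T"
  have x1T: "x1 \<in> T" unfolding x1_def by (rule closed_contains_Sup[OF ne bT cT])
  have x1x: "x1 < x" using x1T nx T_def by (cases "x1 = x") auto
  have above: "u y > u p" if "y \<in> {x1<..x}" for y
  proof (rule ccontr)
    assume "\<not> u p < u y"
    then have "y \<in> T" using that x1T T_def by auto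
    then have "y \<le> x1" using cSup_upper[OF _ bT] x1_def by auto
    then show False using that by auto
  qed
  have x1r: "x1 \<in> {p..<r}" using x1T T_def x x1x by auto
  have "P x1" using bd[of x1] x1T T_def x by auto
  then have neg: "u' x1 < 0" using sg x1r by auto
  obtain d where d: "d > 0" "\<forall>h>0. h < d \<longrightarrow> u x1 > u (x1 + h)"
    using DERIV_neg_dec_right[OF ud[OF x1r] neg] by blast
  obtain mm where m: "0 < mm" "mm \<le> d" "mm \<le> x - x1" using d x1x by (intro that[of "min d (x - x1)"]) auto
  define h where "h = mm / 2"
  have h1a: "h > 0" using m unfolding h_def by linarith
  have h1b: "h < d" using m unfolding h_def by linarith
  have h1c: "x1 + h \<le> x" using m unfolding h_def by linarith
  from h1a h1b h1c have h: "h > 0" "h < d" "x1 + h \<in> {x1<..x}" by auto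
  have "u (x1 + h) < u x1" using d h by auto
  moreover have "u x1 \<le> u p" using x1T T_def by auto
  moreover have "u (x1 + h) > u p" using above h by auto
  ultimately show False by auto
qed


locale gen =
  fixes a b :: real and Q H :: "real \<Rightarrow> real"
  assumes ab: "a < b"
    and Qc: "continuous_on {a..b} Q" and Hc: "continuous_on {a..b} H"
    and Qpos: "\<And>x. x \<in> {a<..<b} \<Longrightarrow> 0 < Q x"
    and Qnn: "\<And>x. x \<in> {a..b} \<Longrightarrow> 0 \<le> Q x"
begin

definition F :: "real \<Rightarrow> real \<Rightarrow> real \<Rightarrow> real" where
  "F C x y = H x - C - Q x / y"

definition sol :: "real \<Rightarrow> (real \<Rightarrow> real) \<Rightarrow> bool" where
  "sol C z \<longleftrightarrow> continuous_on {a<..b} z \<and>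
     (\<forall>x\<in>{a<..<b}. 0 < z x \<and> (z has_real_derivative F C x (z x)) (at x))"

lemma bounds: "\<exists>M>0. \<forall>x\<in>{a..b}. \<bar>H x - C\<bar> \<le> M \<and> Q x \<le> M"
proof -
  have "continuous_on {a..b} (\<lambda>x. H x - C)" using Hc by (intro continuous_intros)
  then have "bounded ((\<lambda>x. H x - C) ` {a..b})" by (intro compact_imp_bounded compact_continuous_image compact_Icc)
  then obtain M1 where "\<forall>y\<in>(\<lambda>x. H x - C) ` {a..b}. norm y \<le> M1"
    unfolding bounded_iff by blast
  then have M1: "\<forall>x\<in>{a..b}. \<bar>H x - C\<bar> \<le> M1" by auto
  obtain M2 where "\<forall>y\<in>Q ` {a..b}. norm y \<le> M2"
    using compact_imp_bounded[OF compact_continuous_image[OF Qc compact_Icc]] unfolding bounded_iff by blast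
  then have M2: "\<forall>x\<in>{a..b}. \<bar>Q x\<bar> \<le> M2" by auto
  show ?thesis
  proof (intro exI conjI ballI)
    show "0 < \<bar>M1\<bar> + \<bar>M2\<bar> + 1" by simp
    fix x assume x: "x \<in> {a..b}"
    show "\<bar>H x - C\<bar> \<le> \<bar>M1\<bar> + \<bar>M2\<bar> + 1" using M1 x by force
    have "Q x \<le> \<bar>Q x\<bar>" by simp
    then show "Q x \<le> \<bar>M1\<bar> + \<bar>M2\<bar> + 1" using M2 x by force
  qed
qed

lemma sol_cont_sub: "sol C z \<Longrightarrow> a < x \<Longrightarrow> x \<le> y \<Longrightarrow> y \<le> b \<Longrightarrow> continuous_on {x..y} z"
  unfolding sol_def by (auto elim: continuous_on_subset)

lemma compare:
  assumes s1: "sol C z1" and s2: "sol C z2" and le: "z1 b \<le> z2 b" and x: "x \<in> {a<..b}"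
  shows "z1 x \<le> z2 x \<and> z2 x - z1 x \<le> z2 b - z1 b"
proof -
  define d where "d t = z2 t - z1 t" for t
  have dd: "(d has_real_derivative Q t * d t / (z1 t * z2 t)) (at t)" if t: "t \<in> {a<..<b}" for t
  proof -
    have p1: "0 < z1 t" and p2: "0 < z2 t" using s1 s2 t unfolding sol_def by auto
    have "(d has_real_derivative F C t (z2 t) - F C t (z1 t)) (at t)"
      unfolding d_def using s1 s2 t unfolding sol_def by (auto intro!: derivative_intros)
    moreover have "F C t (z2 t) - F C t (z1 t) = Q t * d t / (z1 t * z2 t)"
      unfolding F_def d_def using p1 p2 by (simp add: field_simps)
    ultimately show ?thesis by simp
  qed
  have cd: "continuous_on {t..b} d" if "a < t" "t \<le> b" for t
    unfolding d_def using sol_cont_sub[OF s1 that(1) that(2)] sol_cont_sub[OF s2 that(1) that(2)]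
    by (intro continuous_intros) auto
  have nonneg: "0 \<le> d t" if t: "t \<in> {a<..b}" for t
  proof (rule ccontr)
    assume "\<not> 0 \<le> d t"
    then have neg: "d t < 0" by simp
    have "\<forall>y\<in>{t..b}. d y \<le> d t"
    proof (rule first_exit[where v=d and \<theta>=0 and u'="\<lambda>y. Q y * d y / (z1 y * z2 y)"])
      show "t \<le> b" using t by auto
      show "continuous_on {t..b} d" using cd t by auto
      show "continuous_on {t..b} d" using cd t by auto
      fix y assume y: "y \<in> {t<..<b}"
      then have ya: "y \<in> {a<..<b}" using t by auto
      show "(d has_real_derivative Q y * d y / (z1 y * z2 y)) (at y)" using dd[OF ya] .
      assume "d y < 0"
      moreover have "0 < z1 y * z2 y" using s1 s2 ya unfolding sol_def by auto
      moreover have "0 \<le> Q y" using Qnn ya by auto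
      ultimately show "Q y * d y / (z1 y * z2 y) \<le> 0"
        by (simp add: divide_nonpos_pos mult_nonneg_nonpos)
    next
      fix y assume "y \<in> {t..b}" "d y \<le> d t"
      then show "d y < 0" using neg by auto
    qed
    then have "d b \<le> d t" using t by auto
    then show False using neg le unfolding d_def by auto
  qed
  have "d x \<le> d b"
  proof (rule DERIV_nonneg_imp_increasing_open[of x b d])
    show "x \<le> b" using x by auto
    show "continuous_on {x..b} d" using cd x by auto
    fix y assume y: "x < y" "y < b"
    then have ya: "y \<in> {a<..<b}" using x by auto
    have "0 < z1 y * z2 y" using s1 s2 ya unfolding sol_def by auto
    moreover have "0 \<le> Q y" using Qnn ya by auto
    moreover have "0 \<le> d y" using nonneg ya by auto
    ultimately have "0 \<le> Q y * d y / (z1 y * z2 y)" by simp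
    then show "\<exists>D. (d has_real_derivative D) (at y) \<and> 0 \<le> D" using dd[OF ya] by blast
  qed
  then show ?thesis using nonneg[OF x] unfolding d_def by auto
qed

lemma lower_bound:
  assumes x1: "a < x1" "x1 \<le> x2" "x2 < b"
  shows "\<exists>\<epsilon>>0. \<forall>z. sol C z \<longrightarrow> (\<forall>x\<in>{x1..x2}. \<epsilon> \<le> z x)"
proof -
  obtain M where M: "M > 0" "\<forall>x\<in>{a..b}. \<bar>H x - C\<bar> \<le> M \<and> Q x \<le> M" using bounds[of C] by blast
  define \<delta> where "\<delta> = (b - x2) / 2"
  have \<delta>1: "0 < \<delta>" using x1 unfolding \<delta>_def by argo
  have \<delta>2: "x2 + \<delta> < b" using x1 unfolding \<delta>_def by argo
  note \<delta> = \<delta>1 \<delta>2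
  have "\<exists>x\<in>{x1..x2+\<delta>}. \<forall>y\<in>{x1..x2+\<delta>}. Q x \<le> Q y"
    by (rule continuous_attains_inf[OF compact_Icc]) (use continuous_on_subset[OF Qc] x1 \<delta> in auto)
  then obtain xm where xm: "xm \<in> {x1..x2+\<delta>}" "\<forall>y\<in>{x1..x2+\<delta>}. Q xm \<le> Q y" by blast
  define m where "m = Q xm"
  have m: "0 < m" unfolding m_def using Qpos xm x1 \<delta> by auto
  have Qm: "m \<le> Q y" if "y \<in> {x1..x2+\<delta>}" for y using xm that m_def by auto
  define \<epsilon> where "\<epsilon> = min (m / (2*M)) (sqrt (m * \<delta>))"
  have e1: "0 < m / (2*M)" using m M by simp
  have e2: "0 < sqrt (m * \<delta>)" using m \<delta> by simp
  have \<epsilon>: "0 < \<epsilon>" "\<epsilon> \<le> m / (2*M)" "\<epsilon> \<le> sqrt (m * \<delta>)" unfolding \<epsilon>_def using e1 e2 by auto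
  have \<epsilon>2: "\<epsilon>^2 \<le> m * \<delta>"
  proof -
    have "\<epsilon>^2 \<le> (sqrt (m * \<delta>))^2" using \<epsilon> by (intro power_mono) auto
    then show ?thesis using m \<delta> by simp
  qed
  have \<epsilon>M: "2 * \<epsilon> * M \<le> m" using \<epsilon>(2) M by (simp add: field_simps)
  have main: "\<epsilon> \<le> z x0" if z: "sol C z" and x0: "x0 \<in> {x1..x2}" for z x0
  proof (rule ccontr)
    assume "\<not> \<epsilon> \<le> z x0"
    then have lt: "z x0 < \<epsilon>" by simp
    define u where "u t = (z t)^2 + m * (t - x0)" for t
    have zpos: "0 < z t" if "t \<in> {x0..x0+\<delta>}" for t
      using z that x0 x1 \<delta> unfolding sol_def by auto
    have cz: "continuous_on {x0..x0+\<delta>} z" by (rule sol_cont_sub[OF z]) (use x0 x1 \<delta> in auto)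
    have "\<forall>t\<in>{x0..x0+\<delta>}. u t \<le> u x0"
    proof (rule first_exit[where v=z and \<theta>=\<epsilon> and u'="\<lambda>t. 2 * z t * F C t (z t) + m"])
      show "x0 \<le> x0 + \<delta>" using \<delta> by auto
      show "continuous_on {x0..x0+\<delta>} u" unfolding u_def by (intro continuous_intros cz)
      show "continuous_on {x0..x0+\<delta>} z" by (rule cz)
    next
      fix t assume t: "t \<in> {x0<..<x0+\<delta>}"
      then have ta: "t \<in> {a<..<b}" using x0 x1 \<delta> by auto
      have "(z has_real_derivative F C t (z t)) (at t)" using z ta unfolding sol_def by auto
      then show "(u has_real_derivative 2 * z t * F C t (z t) + m) (at t)"
        unfolding u_def by (auto intro!: derivative_eq_intros)
    next
      fix t assume t: "t \<in> {x0<..<x0+\<delta>}" and zt: "z t < \<epsilon>"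
      then have ta: "t \<in> {a..b}" "t \<in> {x1..x2+\<delta>}" using x0 x1 \<delta> by auto
      have zp: "0 < z t" using zpos t by auto
      have "2 * z t * F C t (z t) = 2 * (z t * (H t - C)) - 2 * Q t"
        unfolding F_def using zp by (simp add: field_simps)
      also have "\<dots> \<le> 2 * (\<epsilon> * M) - 2 * m"
      proof -
        have "H t - C \<le> M" using M ta by (auto dest: abs_le_D1)
        then have "z t * (H t - C) \<le> z t * M" using zp by (intro mult_left_mono) auto
        also have "\<dots> \<le> \<epsilon> * M" using zt M by (intro mult_right_mono) auto
        finally show ?thesis using Qm[OF ta(2)] by linarith
      qed
      finally show "2 * z t * F C t (z t) + m \<le> 0" using \<epsilon>M by linarith
    next
      fix t assume t: "t \<in> {x0..x0+\<delta>}" and ut: "u t \<le> u x0"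
      have "0 \<le> m * (t - x0)" using t m by simp
      moreover have "u t = (z t)^2 + m * (t - x0)" "u x0 = (z x0)^2" by (simp_all add: u_def)
      ultimately have "(z t)^2 \<le> (z x0)^2" using ut by linarith
      also have "\<dots> < \<epsilon>^2" using lt zpos[of x0] \<delta> by (intro power_strict_mono) auto
      finally have "(z t)^2 < \<epsilon>^2" .
      then show "z t < \<epsilon>" by (rule power_less_imp_less_base) (use \<epsilon> in auto)
    qed
    then have "u (x0+\<delta>) \<le> u x0" using \<delta> by auto
    then have "(z (x0+\<delta>))^2 + m * \<delta> \<le> (z x0)^2" unfolding u_def by simp
    moreover have "(z x0)^2 < \<epsilon>^2" using lt zpos[of x0] \<delta> by (intro power_strict_mono) auto
    ultimately have "(z (x0+\<delta>))^2 < 0" using \<epsilon>2 by linarith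
    then show False by simp
  qed
  show ?thesis using \<epsilon>(1) main by blast
qed

lemma upper_bound:
  assumes z: "sol C z"
  shows "\<exists>B. \<forall>x\<in>{a<..b}. z x \<le> B"
proof -
  obtain M where M: "M > 0" "\<forall>x\<in>{a..b}. \<bar>H x - C\<bar> \<le> M \<and> Q x \<le> M" using bounds[of C] by blast
  define K where "K = 2 * M"
  define B where "B = max (z b) 1 + K * (b - a)"
  have "z x \<le> B" if x: "x \<in> {a<..b}" for x
  proof (rule ccontr)
    assume "\<not> z x \<le> B"
    then have gt: "z x > B" by simp
    define u where "u t = - (z t + K * t)" for t
    have cz: "continuous_on {x..b} z" by (rule sol_cont_sub[OF z]) (use x in auto)
    have "\<forall>t\<in>{x..b}. u t \<le> u x"
    proof (rule first_exit[where v="\<lambda>t. - z t" and \<theta>="-1" and u'="\<lambda>t. - (F C t (z t) + K)"])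
      show "x \<le> b" using x by auto
      show "continuous_on {x..b} u" unfolding u_def by (intro continuous_intros cz)
      show "continuous_on {x..b} (\<lambda>t. - z t)" by (intro continuous_intros cz)
    next
      fix t assume t: "t \<in> {x<..<b}"
      then have ta: "t \<in> {a<..<b}" using x by auto
      have "(z has_real_derivative F C t (z t)) (at t)" using z ta unfolding sol_def by auto
      then show "(u has_real_derivative - (F C t (z t) + K)) (at t)"
        unfolding u_def by (auto intro!: derivative_eq_intros)
    next
      fix t assume t: "t \<in> {x<..<b}" and zt: "- z t < -1"
      then have ta: "t \<in> {a..b}" using x by auto
      have "Q t / z t \<le> Q t / 1"
        using zt Qnn[OF ta] by (intro divide_left_mono) auto
      moreover have "\<bar>H t - C\<bar> \<le> M" "Q t \<le> M" using M ta by auto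
      ultimately have "0 \<le> H t - C - Q t / z t + 2 * M" by linarith
      then have "0 \<le> F C t (z t) + K" unfolding F_def K_def by simp
      then show "- (F C t (z t) + K) \<le> 0" by simp
    next
      fix t assume t: "t \<in> {x..b}" and ut: "u t \<le> u x"
      have "z t \<ge> z x - K * (t - x)" using ut unfolding u_def by (simp add: algebra_simps)
      moreover have "K * (t - x) \<le> K * (b - a)" using t x M K_def by (intro mult_left_mono) auto
      moreover have "B - K * (b - a) \<ge> 1" unfolding B_def by simp
      ultimately show "- z t < -1" using gt by linarith
    qed
    then have "u b \<le> u x" using x by auto
    then have "z x \<le> z b + K * (b - x)" unfolding u_def by (simp add: algebra_simps)
    moreover have "K * (b - x) \<le> K * (b - a)" using x M K_def by (intro mult_left_mono) auto
    ultimately have "z x \<le> B" unfolding B_def by linarith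
    then show False using gt by simp
  qed
  then show ?thesis by blast
qed

definition FH where "FH t = integral {a..t} H"

lemma FH_deriv: "t \<in> {a..b} \<Longrightarrow> (FH has_real_derivative H t) (at t within {a..b})"
  unfolding FH_def by (rule integral_has_real_derivative[OF Hc])

lemma FH_deriv_at: "t \<in> {a<..<b} \<Longrightarrow> (FH has_real_derivative H t) (at t)"
  using FH_deriv[of t] at_within_interior[of t "{a..b}"] by auto

lemma FH_cont: "continuous_on {a..b} FH"
  unfolding FH_def by (rule indefinite_integral_continuous_1[OF integrable_continuous_interval[OF Hc]])

lemma g_decr:
  assumes z: "continuous_on {x..y} z" and xy: "a < x" "x \<le> y" "y \<le> b" and a_le: "a \<le> x"
    and d: "\<And>t. t \<in> {x<..<y} \<Longrightarrow> 0 < z t \<and> (z has_real_derivative F C t (z t)) (at t)"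
    and xa: "x \<in> {a..b}"
  shows "z y - FH y + C * y \<le> z x - FH x + C * x"
proof (rule DERIV_nonpos_imp_decreasing_open[of x y "\<lambda>t. z t - FH t + C * t"])
  show "x \<le> y" using xy by auto
  show "continuous_on {x..y} (\<lambda>t. z t - FH t + C * t)"
    using z continuous_on_subset[OF FH_cont, of "{x..y}"] xy by (auto intro!: continuous_intros)
  fix t assume t: "x < t" "t < y"
  then have ta: "t \<in> {a<..<b}" using xy by auto
  have "((\<lambda>t. z t - FH t + C * t) has_real_derivative F C t (z t) - H t + C * 1) (at t)"
    using d[of t] t FH_deriv_at[OF ta] by (auto intro!: derivative_eq_intros)
  moreover have "F C t (z t) - H t + C * 1 \<le> 0"
    unfolding F_def using d[of t] t Qnn[of t] ta by (auto simp: divide_nonneg_pos)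
  ultimately show "\<exists>D. ((\<lambda>t. z t - FH t + C * t) has_real_derivative D) (at t) \<and> D \<le> 0" by blast
qed

end

lemma deriv_within_int:
  "(f has_real_derivative D) (at x within {p..r}) \<Longrightarrow> p < x \<Longrightarrow> x < r \<Longrightarrow> (f has_real_derivative D) (at x)"
  using at_within_interior[of x "{p..r}"] by simp

context gen begin

lemma local_exist:
  assumes p: "p \<in> {a<..<b}" and s: "0 < s"
  shows "\<exists>y. continuous_on {p..b} y \<and> y b = s \<and>
    (\<forall>x\<in>{p..b}. 0 < y x \<and> (y has_real_derivative F C x (y x)) (at x within {p..b}))"
proof -
  obtain M where M: "M > 0" "\<forall>x\<in>{a..b}. \<bar>H x - C\<bar> \<le> M \<and> Q x \<le> M" using bounds[of C] by blast
  have HM: "H x - C \<le> M" "Q x \<le> M" "0 \<le> Q x" if "x \<in> {a..b}" for x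
    using M that Qnn[OF that] by (auto dest: abs_le_D1)
  define b' where "b' = max p (b - s/(2*M))"
  have sM: "0 < s/(2*M)" using s M by simp
  have b'1: "p \<le> b'" unfolding b'_def by simp
  have b'2: "b' < b" unfolding b'_def using p sM by auto
  have b'3: "b - b' \<le> s/(2*M)" unfolding b'_def by simp
  have "\<exists>x\<in>{p..b'}. \<forall>y\<in>{p..b'}. Q x \<le> Q y"
    by (rule continuous_attains_inf[OF compact_Icc]) (use continuous_on_subset[OF Qc] p b'1 b'2 in auto)
  then obtain xm where xm: "xm \<in> {p..b'}" "\<forall>y\<in>{p..b'}. Q xm \<le> Q y" by blast
  define m where "m = Q xm"
  have m: "0 < m" unfolding m_def using Qpos xm p b'2 by auto
  have Qm: "m \<le> Q y" if "y \<in> {p..b'}" for y using xm that m_def by auto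
  define \<epsilon> where "\<epsilon> = min (s/2) (m/(2*M))"
  have e1: "0 < m/(2*M)" using m M by simp
  have \<epsilon>: "0 < \<epsilon>" "\<epsilon> \<le> s/2" "\<epsilon> \<le> m/(2*M)" unfolding \<epsilon>_def using s e1 by auto
  have \<epsilon>M: "2 * M \<le> m / \<epsilon>" using \<epsilon> M by (simp add: field_simps)
  define G where "G x y = H x - C - Q x / max y \<epsilon>" for x y
  have Gc: "continuous_on ({p..b} \<times> UNIV) (\<lambda>xy. G (fst xy) (snd xy))"
  proof -
    have c1: "continuous_on ({p..b} \<times> UNIV) (\<lambda>xy::real\<times>real. H (fst xy))"
      by (rule continuous_on_compose2[OF continuous_on_subset[OF Hc] continuous_on_fst]) (use p in auto)
    have c2: "continuous_on ({p..b} \<times> UNIV) (\<lambda>xy::real\<times>real. Q (fst xy))"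
      by (rule continuous_on_compose2[OF continuous_on_subset[OF Qc] continuous_on_fst]) (use p in auto)
    have c3: "continuous_on ({p..b} \<times> UNIV) (\<lambda>xy::real\<times>real. max (snd xy) \<epsilon>)"
      by (intro continuous_intros)
    show ?thesis unfolding G_def
      by (intro continuous_intros c1 c2 c3) (use \<epsilon> in auto)
  qed
  define L where "L = M / \<epsilon>^2 + 1"
  have L: "0 < L" unfolding L_def using M \<epsilon> by (simp add: add_pos_nonneg)
  have Lip: "\<bar>G x u - G x v\<bar> \<le> L * \<bar>u - v\<bar>" if x: "x \<in> {p..b}" for x u v
  proof -
    define A where "A = max u \<epsilon>"
    define B where "B = max v \<epsilon>"
    have A: "\<epsilon> \<le> A" and B: "\<epsilon> \<le> B" unfolding A_def B_def by auto
    have Ap: "0 < A" and Bp: "0 < B" using A B \<epsilon> by auto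
    have AB: "\<bar>A - B\<bar> \<le> \<bar>u - v\<bar>" unfolding A_def B_def by (auto simp: max_def)
    have xa: "x \<in> {a..b}" using x p by auto
    have "G x u - G x v = Q x * (A - B) / (A * B)"
      unfolding G_def A_def[symmetric] B_def[symmetric] using Ap Bp by (simp add: field_simps)
    then have "\<bar>G x u - G x v\<bar> = Q x * \<bar>A - B\<bar> / (A * B)"
      using HM(3)[OF xa] Ap Bp by (simp add: abs_mult)
    also have "\<dots> \<le> M * \<bar>u - v\<bar> / (\<epsilon> * \<epsilon>)"
    proof (rule frac_le)
      show "0 \<le> M * \<bar>u - v\<bar>" using M by simp
      show "Q x * \<bar>A - B\<bar> \<le> M * \<bar>u - v\<bar>" using HM(2,3)[OF xa] AB by (intro mult_mono) auto
      show "0 < \<epsilon> * \<epsilon>" using \<epsilon> by simp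
      show "\<epsilon> * \<epsilon> \<le> A * B" using A B \<epsilon> by (intro mult_mono) auto
    qed
    also have "\<dots> = (M / \<epsilon>^2) * \<bar>u - v\<bar>" by (simp add: power2_eq_square)
    also have "\<dots> \<le> L * \<bar>u - v\<bar>" unfolding L_def by (intro mult_right_mono) auto
    finally show ?thesis .
  qed
  obtain y where yc: "continuous_on {p..b} y" and yb: "y b = s"
    and yd: "\<forall>x\<in>{p..b}. (y has_real_derivative G x (y x)) (at x within {p..b})"
    using picard_back[of p b G L s] p Gc L Lip by auto
  have yd_at: "(y has_real_derivative G x (y x)) (at x)" if "x \<in> {p<..<b}" for x
    using yd that by (intro deriv_within_int[of y _ x p b]) auto
  have Gle: "G x w \<le> M" if "x \<in> {p..b}" for x w
  proof -
    have xa: "x \<in> {a..b}" using that p by auto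
    have "0 \<le> Q x / max w \<epsilon>" using HM(3)[OF xa] \<epsilon> by auto
    then show ?thesis unfolding G_def using HM(1)[OF xa] by linarith
  qed
  have window: "s/2 \<le> y x" if x: "x \<in> {b'..b}" for x
  proof -
    have "y b - M * b \<le> y x - M * x"
    proof (rule DERIV_nonpos_imp_decreasing_open[of x b "\<lambda>t. y t - M * t"])
      show "x \<le> b" using x by auto
      show "continuous_on {x..b} (\<lambda>t. y t - M * t)"
        using continuous_on_subset[OF yc, of "{x..b}"] x b'1 by (auto intro!: continuous_intros)
      fix t assume t: "x < t" "t < b"
      then have tp: "t \<in> {p<..<b}" using x b'1 by auto
      have "((\<lambda>t. y t - M * t) has_real_derivative G t (y t) - M * 1) (at t)"
        using yd_at[OF tp] by (auto intro!: derivative_eq_intros)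
      moreover have "G t (y t) - M * 1 \<le> 0" using Gle[of t] tp by auto
      ultimately show "\<exists>D. ((\<lambda>t. y t - M * t) has_real_derivative D) (at t) \<and> D \<le> 0" by blast
    qed
    then have "s - M * (b - x) \<le> y x" using yb by (simp add: algebra_simps)
    moreover have "M * (b - x) \<le> M * (s/(2*M))" using b'3 x M by (intro mult_left_mono) auto
    moreover have "M * (s/(2*M)) = s/2" using M by simp
    ultimately show ?thesis by linarith
  qed
  have ylow: "\<epsilon> \<le> y x" if x: "x \<in> {p..b}" for x
  proof (cases "b' \<le> x")
    case True
    then show ?thesis using window[of x] x \<epsilon> by auto
  next
    case False
    show ?thesis
    proof (rule ccontr)
      assume "\<not> \<epsilon> \<le> y x"
      then have lt: "y x < \<epsilon>" by simp
      have "\<forall>t\<in>{x..b'}. y t \<le> y x"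
      proof (rule first_exit[where v=y and \<theta>=\<epsilon> and u'="\<lambda>t. G t (y t)"])
        show "x \<le> b'" using False by auto
        show "continuous_on {x..b'} y" using continuous_on_subset[OF yc] x b'2 by auto
        show "continuous_on {x..b'} y" using continuous_on_subset[OF yc] x b'2 by auto
      next
        fix t assume t: "t \<in> {x<..<b'}"
        then have "t \<in> {p<..<b}" using x b'2 by auto
        then show "(y has_real_derivative G t (y t)) (at t)" by (rule yd_at)
      next
        fix t assume t: "t \<in> {x<..<b'}" and yt: "y t < \<epsilon>"
        then have tp: "t \<in> {p..b'}" "t \<in> {a..b}" using x b'2 p by auto
        have "max (y t) \<epsilon> = \<epsilon>" using yt by simp
        then have "G t (y t) = H t - C - Q t / \<epsilon>" unfolding G_def by simp
        moreover have "m / \<epsilon> \<le> Q t / \<epsilon>" using Qm[OF tp(1)] \<epsilon> by (intro divide_right_mono) auto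
        moreover have "H t - C \<le> M" using HM(1)[OF tp(2)] .
        ultimately show "G t (y t) \<le> 0" using \<epsilon>M M by linarith
      next
        fix t assume "t \<in> {x..b'}" "y t \<le> y x"
        then show "y t < \<epsilon>" using lt by auto
      qed
      then have "y b' \<le> y x" using False by auto
      moreover have "s/2 \<le> y b'" using window[of b'] b'2 by auto
      ultimately show False using lt \<epsilon> by linarith
    qed
  qed
  have "\<forall>x\<in>{p..b}. 0 < y x \<and> (y has_real_derivative F C x (y x)) (at x within {p..b})"
  proof
    fix x assume x: "x \<in> {p..b}"
    have "\<epsilon> \<le> y x" using ylow[OF x] .
    then have "max (y x) \<epsilon> = y x" by simp
    then have eqG: "G x (y x) = F C x (y x)" unfolding G_def F_def by simp
    have d: "(y has_real_derivative G x (y x)) (at x within {p..b})" using yd x by blast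
    have "0 < y x" using \<open>\<epsilon> \<le> y x\<close> \<epsilon> by simp
    then show "0 < y x \<and> (y has_real_derivative F C x (y x)) (at x within {p..b})"
      using d eqG by simp
  qed
  then show ?thesis using yc yb by blast
qed

lemma local_unique:
  assumes c1: "continuous_on {p1..b} y1" and d1: "\<forall>x\<in>{p1..b}. 0 < y1 x \<and> (y1 has_real_derivative F C x (y1 x)) (at x within {p1..b})"
    and c2: "continuous_on {p2..b} y2" and d2: "\<forall>x\<in>{p2..b}. 0 < y2 x \<and> (y2 has_real_derivative F C x (y2 x)) (at x within {p2..b})"
    and eq: "y1 b = y2 b" and p1: "a < p1" and p2: "a < p2" and x: "max p1 p2 \<le> x" "x \<le> b"
  shows "y1 x = y2 x"
proof -
  define e where "e t = (y1 t - y2 t)^2" for t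
  have "e x \<le> e b"
  proof (rule DERIV_nonneg_imp_increasing_open[of x b e])
    show "x \<le> b" using x by simp
    show "continuous_on {x..b} e" unfolding e_def
      using continuous_on_subset[OF c1, of "{x..b}"] continuous_on_subset[OF c2, of "{x..b}"] x
      by (auto intro!: continuous_intros)
    fix t assume t: "x < t" "t < b"
    have t1: "t \<in> interior {p1..b}" and t2: "t \<in> interior {p2..b}" using t x by auto
    have dy1: "(y1 has_real_derivative F C t (y1 t)) (at t)"
      using d1 t x by (intro deriv_within_int[of y1 _ t p1 b]) auto
    have dy2: "(y2 has_real_derivative F C t (y2 t)) (at t)"
      using d2 t x by (intro deriv_within_int[of y2 _ t p2 b]) auto
    have pos: "0 < y1 t" "0 < y2 t" using d1 d2 t x by auto
    have "(e has_real_derivative 2 * (y1 t - y2 t) * (F C t (y1 t) - F C t (y2 t))) (at t)"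
      unfolding e_def using dy1 dy2 by (auto intro!: derivative_eq_intros)
    moreover have "F C t (y1 t) - F C t (y2 t) = Q t * (y1 t - y2 t) / (y1 t * y2 t)"
      unfolding F_def using pos by (simp add: field_simps)
    moreover have "0 \<le> 2 * (y1 t - y2 t) * (Q t * (y1 t - y2 t) / (y1 t * y2 t))"
    proof -
      have "0 \<le> Q t" using Qnn t x p1 by auto
      then have "0 \<le> Q t * (y1 t - y2 t)^2 / (y1 t * y2 t)" using pos by simp
      moreover have "2 * (y1 t - y2 t) * (Q t * (y1 t - y2 t) / (y1 t * y2 t)) = 2 * (Q t * (y1 t - y2 t)^2 / (y1 t * y2 t))"
        by (simp add: power2_eq_square field_simps)
      ultimately show ?thesis by linarith
    qed
    ultimately show "\<exists>D. (e has_real_derivative D) (at t) \<and> 0 \<le> D" by auto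
  qed
  then show ?thesis using eq unfolding e_def by simp
qed

lemma exist:
  assumes s: "0 < s"
  shows "\<exists>z. sol C z \<and> z b = s \<and> (z has_real_derivative F C b s) (at b within {a<..b})"
proof -
  define P where "P p y \<longleftrightarrow> continuous_on {p..b} y \<and> y b = s \<and>
    (\<forall>x\<in>{p..b}. 0 < y x \<and> (y has_real_derivative F C x (y x)) (at x within {p..b}))" for p y
  define Z where "Z p = (SOME y. P p y)" for p
  have PZ: "P p (Z p)" if "p \<in> {a<..<b}" for p
  proof -
    have "\<exists>y. P p y" using local_exist[OF that s, of C] unfolding P_def by blast
    then show ?thesis unfolding Z_def by (rule someI_ex)
  qed
  have agree: "Z p1 x = Z p2 x" if "p1 \<in> {a<..<b}" "p2 \<in> {a<..<b}" "max p1 p2 \<le> x" "x \<le> b" for p1 p2 x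
  proof -
    have A: "continuous_on {p1..b} (Z p1)" "Z p1 b = s"
      "\<forall>x\<in>{p1..b}. 0 < Z p1 x \<and> (Z p1 has_real_derivative F C x (Z p1 x)) (at x within {p1..b})"
      using PZ[OF that(1)] unfolding P_def by blast+
    have B: "continuous_on {p2..b} (Z p2)" "Z p2 b = s"
      "\<forall>x\<in>{p2..b}. 0 < Z p2 x \<and> (Z p2 has_real_derivative F C x (Z p2 x)) (at x within {p2..b})"
      using PZ[OF that(2)] unfolding P_def by blast+
    have "Z p1 b = Z p2 b" using A(2) B(2) by simp
    moreover have "a < p1" "a < p2" using that by auto
    ultimately show ?thesis using local_unique[OF A(1) A(3) B(1) B(3)] that(3,4) by blast
  qed
  define z where "z x = Z ((a + x)/2) x" for x
  have p0: "(a + x0)/2 \<in> {a<..<b}" if "x0 \<in> {a<..b}" for x0 using that by auto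
  have zloc: "z x = Z ((a+x0)/2) x" if x0: "x0 \<in> {a<..b}" and x: "x \<in> {(a+x0)/2..b}" for x0 x
  proof -
    have xa: "a < x" using x x0 by auto
    show ?thesis unfolding z_def using x xa x0 by (intro agree p0) auto
  qed
  have cont: "continuous (at x0 within {a<..b}) z" if x0: "x0 \<in> {a<..b}" for x0
  proof -
    define p where "p = (a + x0)/2"
    have pp: "p \<in> {a<..<b}" "p < x0" using p0[OF x0] x0 unfolding p_def by auto
    have "continuous_on {p..b} (Z p)" using PZ[OF pp(1)] unfolding P_def by auto
    moreover have "x0 \<in> {p..b}" using pp x0 by auto
    ultimately have "continuous (at x0 within {p..b}) (Z p)"
      using continuous_on_eq_continuous_within by blast
    moreover have "at x0 within {a<..b} = at x0 within {p..b}"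
      by (rule at_within_nhd[of x0 "{p<..}"]) (use pp x0 in auto)
    ultimately have c: "continuous (at x0 within {a<..b}) (Z p)" by simp
    have e0: "Z p x0 = z x0" using zloc[OF x0, of x0] x0 unfolding p_def by auto
    have c2: "(Z p \<longlongrightarrow> z x0) (at x0 within {a<..b})" using c e0 unfolding continuous_within by simp
    show ?thesis unfolding continuous_within
    proof (rule Lim_transform_within[OF c2])
      show "0 < x0 - p" using pp by simp
      fix x assume xx: "x \<in> {a<..b}" "0 < dist x x0" "dist x x0 < x0 - p"
      then have "p < x" by (auto simp: dist_real_def abs_less_iff)
      then have "x \<in> {p..b}" using xx by auto
      then show "Z p x = z x" using zloc[OF x0, of x] unfolding p_def by simp
    qed
  qed
  have der: "0 < z x0 \<and> (z has_real_derivative F C x0 (z x0)) (at x0)" if x0: "x0 \<in> {a<..<b}" for x0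
  proof -
    define p where "p = (a + x0)/2"
    have x0': "x0 \<in> {a<..b}" using x0 by auto
    have pp: "p \<in> {a<..<b}" "p < x0" using p0[OF x0'] x0 unfolding p_def by auto
    have eq: "z x = Z p x" if "x \<in> {p<..<b}" for x using zloc[OF x0', of x] that unfolding p_def by auto
    have "x0 \<in> interior {p..b}" using pp x0 by auto
    have Pd: "\<forall>x\<in>{p..b}. 0 < Z p x \<and> (Z p has_real_derivative F C x (Z p x)) (at x within {p..b})"
      using PZ[OF pp(1)] unfolding P_def by blast
    have x0pb: "x0 \<in> {p..b}" using pp x0 by auto
    have pos: "0 < Z p x0" using Pd x0pb by blast
    have "(Z p has_real_derivative F C x0 (Z p x0)) (at x0 within {p..b})" using Pd x0pb by blast
    then have d: "(Z p has_real_derivative F C x0 (Z p x0)) (at x0)"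
      by (rule deriv_within_int) (use pp x0 in auto)
    have "(z has_real_derivative F C x0 (Z p x0)) (at x0)"
      by (rule has_field_derivative_transform_within_open[OF d, of "{p<..<b}"]) (use pp x0 eq in auto)
    then show ?thesis using eq[of x0] pp x0 pos by auto
  qed
  have zs: "sol C z" unfolding sol_def
    using cont der continuous_on_eq_continuous_within by blast
  define pb where "pb = (a + b)/2"
  have pb: "pb \<in> {a<..<b}" unfolding pb_def using ab by auto
  have Pb: "\<forall>x\<in>{pb..b}. 0 < Z pb x \<and> (Z pb has_real_derivative F C x (Z pb x)) (at x within {pb..b})"
      "Z pb b = s"
    using PZ[OF pb] unfolding P_def by blast+
  have zb: "z b = s" using zloc[of b b] ab Pb(2) unfolding pb_def by auto
  have "b \<in> {pb..b}" using pb by auto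
  then have "(Z pb has_real_derivative F C b (Z pb b)) (at b within {pb..b})"
    using Pb(1) by blast
  moreover have "at b within {a<..b} = at b within {pb..b}"
    by (rule at_within_nhd[of b "{pb<..}"]) (use pb in auto)
  ultimately have d: "(Z pb has_real_derivative F C b s) (at b within {a<..b})"
    using Pb(2) by simp
  have "(z has_real_derivative F C b s) (at b within {a<..b})"
  proof (rule has_field_derivative_transform_within[OF d, of "b - pb"])
    show "0 < b - pb" using pb by simp
    show "b \<in> {a<..b}" using ab by simp
    fix x assume "x \<in> {a<..b}" "dist x b < b - pb"
    then show "Z pb x = z x" using zloc[of b x] ab unfolding pb_def by (auto simp: dist_real_def)
  qed
  then show ?thesis using zs zb by blast
qed

end

lemma C1I:
  assumes d: "\<And>x. x \<in> {p<..<r} \<Longrightarrow> (f has_real_derivative f' x) (at x)"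
    and c: "continuous_on {p<..<r} f'"
  shows "C1_on {p<..<r} f" "\<And>x. x \<in> {p<..<r} \<Longrightarrow> deriv f x = f' x"
proof -
  show dv: "deriv f x = f' x" if "x \<in> {p<..<r}" for x using DERIV_imp_deriv[OF d[OF that]] .
  show "C1_on {p<..<r} f" unfolding C1_on_def
  proof
    show "\<forall>x\<in>{p<..<r}. f differentiable at x" using d real_differentiable_def by blast
    show "continuous_on {p<..<r} (deriv f)" using c dv by (metis continuous_on_cong)
  qed
qed

lemma C1D:
  assumes "C1_on {p<..<r} f" "x \<in> {p<..<r}"
  shows "(f has_real_derivative deriv f x) (at x)"
  using assms unfolding C1_on_def by (simp add: DERIV_deriv_iff_real_differentiable)

context gen begin

definition zext :: "(real \<Rightarrow> real) \<Rightarrow> real \<Rightarrow> real \<Rightarrow> real" where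
  "zext z L x = (if x = a then L else z x)"

lemma Fcont: "sol C z \<Longrightarrow> continuous_on {a<..<b} (\<lambda>x. F C x (z x))"
proof -
  assume z: "sol C z"
  have "continuous_on {a<..<b} z" using z unfolding sol_def by (auto elim: continuous_on_subset)
  moreover have "continuous_on {a<..<b} H" "continuous_on {a<..<b} Q"
    using Hc Qc by (auto elim: continuous_on_subset)
  moreover have "\<forall>x\<in>{a<..<b}. z x \<noteq> 0" using z unfolding sol_def by force
  ultimately show ?thesis unfolding F_def by (intro continuous_intros) auto
qed

lemma zext_cont:
  assumes z: "sol C z" and L: "(z \<longlongrightarrow> L) (at_right a)"
  shows "continuous_on {a..b} (zext z L)"
proof -
  have "continuous (at x within {a..b}) (zext z L)" if x: "x \<in> {a..b}" for x
  proof (cases "x = a")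
    case True
    have "(zext z L \<longlongrightarrow> L) (at_right a)"
    proof (rule Lim_transform_eventually[OF L])
      show "\<forall>\<^sub>F y in at_right a. z y = zext z L y"
        using eventually_at_right_less[of a] by eventually_elim (auto simp: zext_def)
    qed
    then show ?thesis using True ab unfolding continuous_within by (simp add: at_within_Icc_at_right zext_def)
  next
    case False
    then have xa: "x \<in> {a<..b}" using x by auto
    have "continuous (at x within {a<..b}) z" using z xa unfolding sol_def
      using continuous_on_eq_continuous_within by blast
    moreover have "at x within {a..b} = at x within {a<..b}"
      by (rule at_within_nhd[of x "{a<..}"]) (use xa in auto)
    ultimately have c: "(z \<longlongrightarrow> zext z L x) (at x within {a..b})"
      using False unfolding continuous_within by (simp add: zext_def)
    show ?thesis unfolding continuous_within
    proof (rule Lim_transform_within[OF c, of "x - a"])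
      show "0 < x - a" using xa by simp
      fix y assume "y \<in> {a..b}" "0 < dist y x" "dist y x < x - a"
      then have "y \<noteq> a" by (auto simp: dist_real_def)
      then show "z y = zext z L y" by (simp add: zext_def)
    qed
  qed
  then show ?thesis using continuous_on_eq_continuous_within by blast
qed

lemma zext_deriv:
  assumes z: "sol C z" and x: "x \<in> {a<..<b}"
  shows "(zext z L has_real_derivative F C x (zext z L x)) (at x)"
proof -
  have d: "(z has_real_derivative F C x (z x)) (at x)" using z x unfolding sol_def by auto
  have "(zext z L has_real_derivative F C x (z x)) (at x)"
    by (rule has_field_derivative_transform_within_open[OF d, of "{a<..<b}"]) (use x in \<open>auto simp: zext_def\<close>)
  then show ?thesis using x by (simp add: zext_def)
qed

lemma zext_pos_sol:
  assumes z: "sol C z" and L: "(z \<longlongrightarrow> L) (at_right a)"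
  shows "pos_sol_on Q H C a b (zext z L)"
proof -
  have eqc: "continuous_on {a<..<b} (\<lambda>x. F C x (zext z L x))"
    using Fcont[OF z] by (rule continuous_on_cong[THEN iffD1, rotated 2]) (auto simp: zext_def)
  have C1: "C1_on {a<..<b} (zext z L)" "\<And>x. x \<in> {a<..<b} \<Longrightarrow> deriv (zext z L) x = F C x (zext z L x)"
    using C1I[of a b "zext z L" "\<lambda>x. F C x (zext z L x)", OF zext_deriv[OF z] eqc] by auto
  have pos: "\<forall>x\<in>{a<..<b}. 0 < zext z L x" using z unfolding sol_def zext_def by auto
  show ?thesis unfolding pos_sol_on_def
    using zext_cont[OF z L] C1 pos by (auto simp: F_def)
qed

lemma pos_sol_sol:
  assumes p: "pos_sol_on Q H C a b z"
  shows "sol C z"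
proof -
  have c: "continuous_on {a<..b} z" using p unfolding pos_sol_on_def by (auto elim: continuous_on_subset)
  have "0 < z x \<and> (z has_real_derivative F C x (z x)) (at x)" if x: "x \<in> {a<..<b}" for x
  proof -
    have C1: "C1_on {a<..<b} z" and e: "deriv z x = H x - C - Q x / z x" and pz: "0 < z x"
      using p x unfolding pos_sol_on_def by auto
    show ?thesis using C1D[OF C1 x] e pz by (simp add: F_def)
  qed
  then show ?thesis using c unfolding sol_def by blast
qed

lemma zeta_from:
  assumes w: "sol C w" and L: "(w \<longlongrightarrow> L) (at_right a)" and wb: "w b = 0"
  shows "zeta_sol Q (\<lambda>x. - H x) a b (- C) (\<lambda>x. - zext w L x)"
proof -
  have d: "((\<lambda>x. - zext w L x) has_real_derivative - F C x (zext w L x)) (at x)" if "x \<in> {a<..<b}" for x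
    using zext_deriv[OF w that] by (auto intro!: derivative_eq_intros)
  have eqc: "continuous_on {a<..<b} (\<lambda>x. - F C x (zext w L x))"
    using Fcont[OF w] by (intro continuous_intros) (rule continuous_on_cong[THEN iffD1, rotated 2], auto simp: zext_def)
  have C1: "C1_on {a<..<b} (\<lambda>x. - zext w L x)" "\<And>x. x \<in> {a<..<b} \<Longrightarrow> deriv (\<lambda>x. - zext w L x) x = - F C x (zext w L x)"
    using C1I[OF d eqc] by auto
  have pos: "\<forall>x\<in>{a<..<b}. 0 < zext w L x" using w unfolding sol_def zext_def by auto
  have cont: "continuous_on {a..b} (\<lambda>x. - zext w L x)" using zext_cont[OF w L] by (intro continuous_intros)
  have "\<forall>x\<in>{a<..<b}. deriv (\<lambda>x. - zext w L x) x = - H x - - C - Q x / (- zext w L x) \<and> - zext w L x < 0"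
  proof
    fix x assume x: "x \<in> {a<..<b}"
    then show "deriv (\<lambda>x. - zext w L x) x = - H x - - C - Q x / (- zext w L x) \<and> - zext w L x < 0"
      using C1(2)[OF x] pos by (auto simp: F_def)
  qed
  moreover have "- zext w L b = 0" using wb ab by (simp add: zext_def)
  ultimately show ?thesis unfolding zeta_sol_def using cont C1(1) by auto
qed

lemma lim_at_a:
  assumes z: "sol C z"
  shows "\<exists>L. (z \<longlongrightarrow> L) (at_right a)"
proof -
  obtain B where B: "\<forall>x\<in>{a<..b}. z x \<le> B" using upper_bound[OF z] by blast
  obtain MF where MF: "\<forall>y\<in>FH ` {a..b}. norm y \<le> MF"
    using compact_imp_bounded[OF compact_continuous_image[OF FH_cont compact_Icc]] unfolding bounded_iff by blast
  define g where "g t = z t - FH t + C * t" for t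
  have gdec: "g y \<le> g x" if "a < x" "x \<le> y" "y \<le> b" for x y
    unfolding g_def
  proof (rule g_decr)
    show "continuous_on {x..y} z" using sol_cont_sub[OF z] that by auto
    fix t assume "t \<in> {x<..<y}"
    then show "0 < z t \<and> (z has_real_derivative F C t (z t)) (at t)" using z that unfolding sol_def by auto
  qed (use that in auto)
  have gb: "g t \<le> B + MF + \<bar>C\<bar> * (\<bar>a\<bar> + \<bar>b\<bar>)" if t: "t \<in> {a<..b}" for t
  proof -
    have "t \<in> {a..b}" using t by auto
    then have "norm (FH t) \<le> MF" using MF by blast
    then have "\<bar>FH t\<bar> \<le> MF" by simp
    then have "- FH t \<le> MF" by (rule abs_le_D2)
    moreover have "C * t \<le> \<bar>C\<bar> * (\<bar>a\<bar> + \<bar>b\<bar>)"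
    proof -
      have "C * t \<le> \<bar>C * t\<bar>" by simp
      also have "\<dots> = \<bar>C\<bar> * \<bar>t\<bar>" by (simp add: abs_mult)
      also have "\<dots> \<le> \<bar>C\<bar> * (\<bar>a\<bar> + \<bar>b\<bar>)" using t by (intro mult_left_mono) auto
      finally show ?thesis .
    qed
    ultimately show ?thesis unfolding g_def using B t by force
  qed
  define Lg where "Lg = Sup (g ` {a<..b})"
  have bdd: "bdd_above (g ` {a<..b})" by (rule bdd_aboveI2[of _ _ "B + MF + \<bar>C\<bar> * (\<bar>a\<bar> + \<bar>b\<bar>)"]) (rule gb)
  have ne: "g ` {a<..b} \<noteq> {}" using ab by auto
  have gLg: "(g \<longlongrightarrow> Lg) (at_right a)"
  proof (rule order_tendstoI)
    fix l assume l: "l < Lg"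
    then obtain y where y: "y \<in> g ` {a<..b}" "l < y" using less_cSupD[OF ne] Lg_def by blast
    then obtain t1 where t1: "t1 \<in> {a<..b}" "l < g t1" by auto
    have "\<forall>\<^sub>F x in at_right a. x \<in> {a<..<t1}" using eventually_at_right_real[of a t1] t1 by auto
    then show "\<forall>\<^sub>F x in at_right a. l < g x"
    proof (rule eventually_mono)
      fix x assume "x \<in> {a<..<t1}"
      then have "g t1 \<le> g x" using gdec[of x t1] t1 by auto
      then show "l < g x" using t1 by auto
    qed
  next
    fix u assume u: "Lg < u"
    show "\<forall>\<^sub>F x in at_right a. g x < u"
      using eventually_at_right_real[OF ab]
    proof (rule eventually_mono)
      fix x assume "x \<in> {a<..<b}"
      then have "g x \<in> g ` {a<..b}" by auto
      then have "g x \<le> Lg" unfolding Lg_def by (rule cSup_upper[OF _ bdd])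
      then show "g x < u" using u by auto
    qed
  qed
  have FHa: "(FH \<longlongrightarrow> FH a) (at_right a)"
    using FH_cont ab unfolding continuous_on_def by (metis atLeastAtMost_iff at_within_Icc_at_right order.refl less_imp_le)
  have "((\<lambda>t. g t + FH t - C * t) \<longlongrightarrow> Lg + FH a - C * a) (at_right a)"
    by (intro tendsto_intros gLg FHa)
  moreover have "(\<lambda>t. g t + FH t - C * t) = z" unfolding g_def by auto
  ultimately show ?thesis by auto
qed

end

context gen begin

lemma limit_sol: "\<exists>w. sol C w \<and> w b = 0"
proof -
  define sn where "sn n = inverse (real (Suc n))" for n :: nat
  have snpos: "0 < sn n" for n unfolding sn_def by simp
  have snmono: "sn m \<le> sn n" if "n \<le> m" for n m unfolding sn_def using that
    by (simp add: le_imp_inverse_le)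
  have snlim: "sn \<longlonglongrightarrow> 0" unfolding sn_def by (rule LIMSEQ_inverse_real_of_nat)
  have snev: "\<exists>N. \<forall>n\<ge>N. sn n < e" if e0: "0 < e" for e
  proof -
    obtain N where N: "\<forall>n\<ge>N. dist (sn n) 0 < e" using snlim e0 unfolding LIMSEQ_def by blast
    have "\<forall>n\<ge>N. sn n < e"
    proof (intro allI impI)
      fix n assume "N \<le> n"
      then have "dist (sn n) 0 < e" using N by blast
      then show "sn n < e" using snpos[of n] by (simp add: dist_real_def)
    qed
    then show ?thesis by blast
  qed
  define zn where "zn n = (SOME z. sol C z \<and> z b = sn n)" for n
  have zn: "sol C (zn n) \<and> zn n b = sn n" for n
  proof -
    have "\<exists>z. sol C z \<and> z b = sn n" using exist[OF snpos[of n], of C] by blast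
    then show ?thesis unfolding zn_def by (rule someI_ex)
  qed
  have mono: "zn m x \<le> zn n x \<and> zn n x - zn m x \<le> sn n - sn m" if "n \<le> m" "x \<in> {a<..b}" for n m x
    using compare[of C "zn m" "zn n" x] zn[of m] zn[of n] snmono[OF that(1)] that(2) by auto
  have conv: "convergent (\<lambda>n. zn n x)" if x: "x \<in> {a<..b}" for x
  proof -
    have "Cauchy (\<lambda>n. zn n x)"
    proof (rule metric_CauchyI)
      fix e :: real assume e: "0 < e"
      obtain N where N: "\<forall>n\<ge>N. sn n < e/2" using snev[of "e/2"] e by auto
      show "\<exists>M. \<forall>m\<ge>M. \<forall>n\<ge>M. dist (zn m x) (zn n x) < e"
      proof (intro exI allI impI)
        fix m n assume mn: "N \<le> m" "N \<le> n"
        have "zn m x \<le> zn N x \<and> zn N x - zn m x \<le> sn N - sn m" using mono[OF mn(1) x] .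
        moreover have "zn n x \<le> zn N x \<and> zn N x - zn n x \<le> sn N - sn n" using mono[OF mn(2) x] .
        moreover have "sn N < e/2" using N by auto
        moreover have "0 < sn m" "0 < sn n" using snpos by auto
        ultimately show "dist (zn m x) (zn n x) < e" by (simp add: dist_real_def abs_less_iff)
      qed
    qed
    then show ?thesis using Cauchy_convergent_iff by blast
  qed
  define w where "w x = lim (\<lambda>n. zn n x)" for x
  have wlim: "(\<lambda>n. zn n x) \<longlonglongrightarrow> w x" if "x \<in> {a<..b}" for x
    using conv[OF that] unfolding w_def convergent_LIMSEQ_iff .
  have wb: "0 \<le> zn n x - w x \<and> zn n x - w x \<le> sn n" if x: "x \<in> {a<..b}" for n x
  proof -
    have lim: "(\<lambda>m. zn n x - zn m x) \<longlonglongrightarrow> zn n x - w x" by (intro tendsto_intros wlim x)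
    have ev: "\<forall>\<^sub>F m in sequentially. 0 \<le> zn n x - zn m x \<and> zn n x - zn m x \<le> sn n"
      unfolding eventually_sequentially
    proof (intro exI allI impI)
      fix m assume "n \<le> m"
      from mono[OF this x] snpos[of m] show "0 \<le> zn n x - zn m x \<and> zn n x - zn m x \<le> sn n" by auto
    qed
    have ev1: "\<forall>\<^sub>F m in sequentially. 0 \<le> zn n x - zn m x" using ev by (rule eventually_mono) simp
    have ev2: "\<forall>\<^sub>F m in sequentially. zn n x - zn m x \<le> sn n" using ev by (rule eventually_mono) simp
    have "0 \<le> zn n x - w x" using ev1 by (rule tendsto_lowerbound[OF lim]) simp
    moreover have "zn n x - w x \<le> sn n" using ev2 by (rule tendsto_upperbound[OF lim]) simp
    ultimately show ?thesis by simp
  qed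
  have ul: "uniform_limit {a<..b} zn w sequentially"
    unfolding uniform_limit_iff
  proof (intro allI impI)
    fix e :: real assume e: "0 < e"
    obtain N where N: "\<forall>n\<ge>N. sn n < e" using snev[OF e] by auto
    show "\<forall>\<^sub>F n in sequentially. \<forall>x\<in>{a<..b}. dist (zn n x) (w x) < e"
      unfolding eventually_sequentially
    proof (intro exI allI impI ballI)
      fix n x assume "N \<le> n" "x \<in> {a<..b}"
      then show "dist (zn n x) (w x) < e" using wb[of x n] N by (auto simp: dist_real_def)
    qed
  qed
  have wc: "continuous_on {a<..b} w"
    by (rule uniform_limit_theorem[OF _ ul]) (use zn in \<open>auto simp: sol_def\<close>)
  have wb0: "w b = 0"
  proof -
    have "(\<lambda>n. zn n b) \<longlonglongrightarrow> w b" using wlim ab by auto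
    moreover have "(\<lambda>n. zn n b) = sn" using zn by auto
    ultimately show ?thesis using snlim LIMSEQ_unique by metis
  qed
  obtain M where M: "M > 0" "\<forall>x\<in>{a..b}. \<bar>H x - C\<bar> \<le> M \<and> Q x \<le> M" using bounds[of C] by blast
  have interior: "0 < w x \<and> (w has_real_derivative F C x (w x)) (at x)" if x: "x \<in> {a<..<b}" for x
  proof -
    define x1 where "x1 = (a + x)/2"
    define x2 where "x2 = (x + b)/2"
    have xs: "a < x1" "x1 < x" "x < x2" "x2 < b" using x unfolding x1_def x2_def by auto
    obtain \<epsilon> where \<epsilon>: "\<epsilon> > 0" "\<forall>z. sol C z \<longrightarrow> (\<forall>t\<in>{x1..x2}. \<epsilon> \<le> z t)"
      using lower_bound[of x1 x2 C] xs by auto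
    have zne: "\<epsilon> \<le> zn n t" if "t \<in> {x1..x2}" for n t using \<epsilon> zn that by blast
    have wne: "\<epsilon> \<le> w t" if t: "t \<in> {x1..x2}" for t
    proof -
      have "t \<in> {a<..b}" using t xs by auto
      then show ?thesis by (rule tendsto_lowerbound[OF wlim]) (use zne[OF t] in auto)
    qed
    have "\<exists>g. \<forall>t\<in>{x1..x2}. (\<lambda>n. zn n t) \<longlonglongrightarrow> g t \<and>
            (g has_derivative (\<lambda>h. F C t (w t) * h)) (at t within {x1..x2})"
    proof (rule has_derivative_sequence[of "{x1..x2}" zn "\<lambda>n t h. F C t (zn n t) * h"])
      show "convex {x1..x2}" by simp
      fix n t assume t: "t \<in> {x1..x2}"
      then have ta: "t \<in> {a<..<b}" using xs by auto
      have "(zn n has_real_derivative F C t (zn n t)) (at t)" using zn[of n] ta unfolding sol_def by auto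
      then have "(zn n has_derivative (*) (F C t (zn n t))) (at t)" unfolding has_field_derivative_def .
      then show "(zn n has_derivative (\<lambda>h. F C t (zn n t) * h)) (at t within {x1..x2})"
        by (rule has_derivative_at_withinI)
    next
      fix e :: real assume e: "0 < e"
      obtain N where N: "\<forall>n\<ge>N. sn n < e * \<epsilon>^2 / M" using snev[of "e * \<epsilon>^2 / M"] e \<epsilon> M by auto
      show "\<forall>\<^sub>F n in sequentially. \<forall>t\<in>{x1..x2}. \<forall>h. norm (F C t (zn n t) * h - F C t (w t) * h) \<le> e * norm h"
        unfolding eventually_sequentially
      proof (intro exI allI impI ballI)
        fix n t h assume n: "N \<le> n" and t: "t \<in> {x1..x2}"
        have ta: "t \<in> {a<..b}" "t \<in> {a..b}" using t xs by auto
        have z1: "\<epsilon> \<le> zn n t" and w1: "\<epsilon> \<le> w t" using zne[OF t] wne[OF t] by auto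
        have d: "0 \<le> zn n t - w t" "zn n t - w t \<le> sn n" using wb[OF ta(1)] by auto
        have Qt: "0 \<le> Q t" "Q t \<le> M" using M Qnn ta by auto
        have eq: "F C t (zn n t) - F C t (w t) = Q t * (zn n t - w t) / (zn n t * w t)"
          unfolding F_def using z1 w1 \<epsilon> by (simp add: field_simps)
        have "\<bar>F C t (zn n t) - F C t (w t)\<bar> = Q t * (zn n t - w t) / (zn n t * w t)"
          unfolding eq using Qt d z1 w1 \<epsilon> by simp
        also have "\<dots> \<le> M * sn n / (\<epsilon> * \<epsilon>)"
          using Qt d z1 w1 \<epsilon> by (intro frac_le mult_mono) auto
        also have "\<dots> \<le> e"
        proof -
          have "M * sn n \<le> M * (e * \<epsilon>^2 / M)" using N n M by (intro mult_left_mono) auto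
          then have "M * sn n \<le> e * (\<epsilon> * \<epsilon>)" using M by (simp add: power2_eq_square)
          then show ?thesis using \<epsilon> by (simp add: divide_le_eq)
        qed
        finally have "\<bar>F C t (zn n t) - F C t (w t)\<bar> \<le> e" .
        then have "\<bar>F C t (zn n t) - F C t (w t)\<bar> * \<bar>h\<bar> \<le> e * \<bar>h\<bar>" by (intro mult_right_mono) auto
        then show "norm (F C t (zn n t) * h - F C t (w t) * h) \<le> e * norm h"
          by (simp add: left_diff_distrib[symmetric] abs_mult)
      qed
    next
      show "x \<in> {x1..x2}" using xs by auto
      show "(\<lambda>n. zn n x) \<longlonglongrightarrow> w x" using wlim x by auto
    qed
    then obtain g where g: "\<forall>t\<in>{x1..x2}. (\<lambda>n. zn n t) \<longlonglongrightarrow> g t \<and>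
            (g has_derivative (\<lambda>h. F C t (w t) * h)) (at t within {x1..x2})" by blast
    have gw: "g t = w t" if "t \<in> {x1..x2}" for t
      using g that wlim[of t] xs LIMSEQ_unique by fastforce
    have xS: "x \<in> {x1..x2}" using xs by auto
    have "(g has_derivative (\<lambda>h. F C x (w x) * h)) (at x within {x1..x2})" using g xS by blast
    then have "(g has_real_derivative F C x (w x)) (at x within {x1..x2})" unfolding has_field_derivative_def .
    then have "(w has_real_derivative F C x (w x)) (at x within {x1..x2})"
      by (rule has_field_derivative_transform_within[where d=1]) (use xs gw in auto)
    then have "(w has_real_derivative F C x (w x)) (at x)"
      by (rule deriv_within_int) (use xs in auto)
    moreover have "0 < w x" using wne[of x] xs \<epsilon> by auto
    ultimately show ?thesis by simp
  qed
  have "sol C w" unfolding sol_def using wc interior by blast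
  then show ?thesis using wb0 by blast
qed

end

context gen begin

lemma FH_a: "FH a = 0" unfolding FH_def by simp

lemma member_bound:
  assumes p: "pos_sol_on Q H C a b z" and za: "z a = 0"
  shows "z b \<le> FH b - C * b + C * a"
proof -
  have s: "sol C z" by (rule pos_sol_sol[OF p])
  have "z b - FH b + C * b \<le> z a - FH a + C * a"
  proof (rule DERIV_nonpos_imp_decreasing_open[of a b "\<lambda>t. z t - FH t + C * t"])
    show "a \<le> b" using ab by simp
    show "continuous_on {a..b} (\<lambda>t. z t - FH t + C * t)"
      using p FH_cont unfolding pos_sol_on_def by (auto intro!: continuous_intros)
    fix t assume t: "a < t" "t < b"
    then have ta: "t \<in> {a<..<b}" by auto
    have d: "(z has_real_derivative F C t (z t)) (at t)" and zp: "0 < z t" using s ta unfolding sol_def by auto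
    have "((\<lambda>t. z t - FH t + C * t) has_real_derivative F C t (z t) - H t + C * 1) (at t)"
      using d FH_deriv_at[OF ta] by (auto intro!: derivative_eq_intros)
    moreover have "F C t (z t) - H t + C * 1 \<le> 0"
      unfolding F_def using zp Qnn[of t] ta by (auto simp: divide_nonneg_pos)
    ultimately show "\<exists>D. ((\<lambda>t. z t - FH t + C * t) has_real_derivative D) (at t) \<and> D \<le> 0" by blast
  qed
  then show ?thesis using za FH_a by simp
qed

lemma sol_lim0:
  assumes p: "pos_sol_on Q H C a b z" and za: "z a = 0"
  shows "(z \<longlongrightarrow> 0) (at_right a)"
proof -
  have "continuous_on {a..b} z" using p unfolding pos_sol_on_def by auto
  then have "(z \<longlongrightarrow> z a) (at a within {a..b})" using ab
    unfolding continuous_on_def by auto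
  then show ?thesis using za ab by (simp add: at_within_Icc_at_right)
qed

lemma main_exist:
  assumes CC: "C < C2" and nz: "\<not> (\<exists>\<zeta>. zeta_sol Q (\<lambda>x. - H x) a b (- C2) \<zeta> \<and> \<zeta> a < 0)"
  shows "bdd_above {z b |z. pos_sol_on Q H C a b z \<and> z a = 0}"
    "\<exists>s\<in>{z b |z. pos_sol_on Q H C a b z \<and> z a = 0}. 0 < s"
    "\<forall>s\<in>{0<..Sup {z b |z. pos_sol_on Q H C a b z \<and> z a = 0}}. \<exists>z. pos_sol_on Q H C a b z \<and> z a = 0 \<and> z b = s \<and>
        (z has_real_derivative F C b s) (at b within {a..b})"
proof -
  define S where "S = {z b |z. pos_sol_on Q H C a b z \<and> z a = 0}"
  show bdd: "bdd_above {z b |z. pos_sol_on Q H C a b z \<and> z a = 0}"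
    by (rule bdd_aboveI[of _ "FH b - C * b + C * a"]) (use member_bound in auto)
  have extmem: "zext z 0 b \<in> S \<and> pos_sol_on Q H C a b (zext z 0) \<and> zext z 0 a = 0 \<and> zext z 0 b = z b"
    if z: "sol C z" "(z \<longlongrightarrow> 0) (at_right a)" for z
  proof -
    have "pos_sol_on Q H C a b (zext z 0)" by (rule zext_pos_sol[OF z])
    moreover have "zext z 0 a = 0" "zext z 0 b = z b" using ab by (auto simp: zext_def)
    ultimately show ?thesis unfolding S_def by blast
  qed
  obtain w where w: "sol C2 w" "w b = 0" using limit_sol[of C2] by blast
  obtain L where L: "(w \<longlongrightarrow> L) (at_right a)" using lim_at_a[OF w(1)] by blast
  have wpos: "\<forall>\<^sub>F x in at_right a. 0 < w x"
    using eventually_at_right_real[OF ab] by (rule eventually_mono) (use w(1) in \<open>auto simp: sol_def\<close>)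
  have L0: "0 \<le> L"
    by (rule tendsto_lowerbound[OF L]) (use wpos in \<open>auto elim: eventually_mono\<close>)
  have "L = 0"
  proof (rule ccontr)
    assume "L \<noteq> 0"
    then have Lp: "0 < L" using L0 by simp
    have "zeta_sol Q (\<lambda>x. - H x) a b (- C2) (\<lambda>x. - zext w L x)" by (rule zeta_from[OF w(1) L w(2)])
    moreover have "- zext w L a < 0" using Lp by (simp add: zext_def)
    ultimately show False using nz by blast
  qed
  then have wL: "(w \<longlongrightarrow> 0) (at_right a)" using L by simp
  define \<delta> where "\<delta> = C2 - C"
  have \<delta>: "0 < \<delta>" using CC unfolding \<delta>_def by simp
  define s0 where "s0 = \<delta> * (b - a) / 4"
  have s0: "0 < s0" unfolding s0_def using \<delta> ab by simp
  obtain zs where zs: "sol C zs" "zs b = s0" using exist[OF s0, of C] by blast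
  define mid where "mid = (a + b) / 2"
  have mid: "a < mid" "mid < b" "b - mid = (b - a)/2" unfolding mid_def using ab by (auto simp: field_simps)
  have below: "zs y < w y" if y: "y \<in> {a<..mid}" for y
  proof (rule ccontr)
    assume "\<not> zs y < w y"
    then have Dy: "0 \<le> zs y - w y" by simp
    define D where "D t = zs t - w t" for t
    define D' where "D' t = F C t (zs t) - F C2 t (w t)" for t
    have yb: "a < y" "y \<le> b" using y mid by auto
    have cD: "continuous_on {y..b} D" unfolding D_def
      using sol_cont_sub[OF zs(1) yb(1) _ order.refl] sol_cont_sub[OF w(1) yb(1) _ order.refl] yb
      by (intro continuous_intros) auto
    have dD: "(D has_real_derivative D' t) (at t)" if t: "t \<in> {a<..<b}" for t
      unfolding D_def D'_def using zs(1) w(1) t unfolding sol_def by (auto intro!: derivative_intros)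
    have D'ge: "\<delta> \<le> D' t" if t: "t \<in> {a<..<b}" and Dt: "0 \<le> D t" for t
    proof -
      have p1: "0 < zs t" "0 < w t" using zs(1) w(1) t unfolding sol_def by auto
      have "D' t = \<delta> + Q t * D t / (zs t * w t)"
        unfolding D'_def D_def F_def \<delta>_def using p1 by (simp add: field_simps)
      moreover have "0 \<le> Q t * D t / (zs t * w t)" using Qnn[of t] t Dt p1 by simp
      ultimately show ?thesis by simp
    qed
    have "\<forall>t\<in>{y..b}. - D t \<le> - D y"
    proof (rule first_exit_strict[where u'="\<lambda>t. - D' t" and P="\<lambda>t. 0 \<le> D t"])
      show "y \<le> b" using yb by simp
      show "continuous_on {y..b} (\<lambda>t. - D t)" using cD by (intro continuous_intros)
    next
      fix t assume t: "t \<in> {y..<b}"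
      then have ta: "t \<in> {a<..<b}" using yb by auto
      show "((\<lambda>t. - D t) has_real_derivative - D' t) (at t)" using dD[OF ta] by (auto intro!: derivative_eq_intros)
    next
      fix t assume t: "t \<in> {y..<b}" "0 \<le> D t"
      then have ta: "t \<in> {a<..<b}" using yb by auto
      show "- D' t < 0" using D'ge[OF ta t(2)] \<delta> by simp
    next
      fix t assume "t \<in> {y..b}" "- D t \<le> - D y"
      then show "0 \<le> D t" using Dy unfolding D_def by simp
    qed
    then have Dmono: "D y \<le> D t" if "t \<in> {y..b}" for t using that by auto
    have "D y - \<delta> * y \<le> D b - \<delta> * b"
    proof (rule DERIV_nonneg_imp_increasing_open[of y b "\<lambda>t. D t - \<delta> * t"])
      show "y \<le> b" using yb by simp
      show "continuous_on {y..b} (\<lambda>t. D t - \<delta> * t)" using cD by (intro continuous_intros)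
      fix t assume t: "y < t" "t < b"
      then have ta: "t \<in> {a<..<b}" using yb by auto
      have "((\<lambda>t. D t - \<delta> * t) has_real_derivative D' t - \<delta> * 1) (at t)"
        using dD[OF ta] by (auto intro!: derivative_eq_intros)
      moreover have "0 \<le> D t" using Dmono[of t] Dy t unfolding D_def by auto
      then have "0 \<le> D' t - \<delta> * 1" using D'ge[OF ta] by simp
      ultimately show "\<exists>E. ((\<lambda>t. D t - \<delta> * t) has_real_derivative E) (at t) \<and> 0 \<le> E" by blast
    qed
    moreover have "D b = s0" unfolding D_def using zs(2) w(2) by simp
    moreover have "\<delta> * (b - mid) \<le> \<delta> * (b - y)" using y \<delta> by (intro mult_left_mono) auto
    moreover have "\<delta> * (b - mid) = 2 * s0" unfolding s0_def using mid(3) by simp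
    ultimately have "2 * s0 \<le> s0" using Dy unfolding D_def by (simp add: algebra_simps)
    then show False using s0 by simp
  qed
  have zs0: "(zs \<longlongrightarrow> 0) (at_right a)"
  proof (rule tendsto_sandwich[where f="\<lambda>_. 0" and h=w])
    show "\<forall>\<^sub>F n in at_right a. 0 \<le> zs n"
      using eventually_at_right_real[OF ab]
    proof (rule eventually_mono)
      fix x assume "x \<in> {a<..<b}"
      then have "0 < zs x" using zs(1) unfolding sol_def by blast
      then show "0 \<le> zs x" by simp
    qed
    show "\<forall>\<^sub>F n in at_right a. zs n \<le> w n"
      using eventually_at_right_real[OF mid(1)] by (rule eventually_mono) (use below in \<open>auto simp: less_imp_le\<close>)
  qed (use wL in auto)
  have S1: "\<exists>s\<in>S. 0 < s" using extmem[OF zs(1) zs0] zs(2) s0 by auto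
  then show "\<exists>s\<in>{z b |z. pos_sol_on Q H C a b z \<and> z a = 0}. 0 < s" unfolding S_def .
  have Sne: "S \<noteq> {}" using S1 by auto
  show "\<forall>s\<in>{0<..Sup {z b |z. pos_sol_on Q H C a b z \<and> z a = 0}}. \<exists>z. pos_sol_on Q H C a b z \<and> z a = 0 \<and> z b = s \<and>
        (z has_real_derivative F C b s) (at b within {a..b})"
  proof
    fix s assume s: "s \<in> {0<..Sup {z b |z. pos_sol_on Q H C a b z \<and> z a = 0}}"
    then have s1: "0 < s" "s \<le> Sup S" unfolding S_def by auto
    obtain z where z: "sol C z" "z b = s" "(z has_real_derivative F C b s) (at b within {a<..b})"
      using exist[OF s1(1), of C] by blast
    have zpos: "\<forall>\<^sub>F x in at_right a. 0 < z x"
      using eventually_at_right_real[OF ab] by (rule eventually_mono) (use z(1) in \<open>auto simp: sol_def\<close>)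
    have z0: "(z \<longlongrightarrow> 0) (at_right a)"
    proof (rule order_tendstoI)
      fix l :: real assume "l < 0"
      then show "\<forall>\<^sub>F x in at_right a. l < z x" using zpos by (auto elim: eventually_mono)
    next
      fix e :: real assume e: "0 < e"
      have "s - e/2 < Sup S" using s1 e by simp
      then obtain m where mS: "m \<in> S" "s - e/2 < m" using less_cSupD[OF Sne] by blast
      then obtain zm where zm: "pos_sol_on Q H C a b zm" "zm a = 0" "zm b = m" unfolding S_def by blast
      have szm: "sol C zm" by (rule pos_sol_sol[OF zm(1)])
      have "(0::real) < e/2" using e by simp
      with sol_lim0[OF zm(1,2)] have "\<forall>\<^sub>F x in at_right a. zm x < e/2" by (rule order_tendstoD)
      moreover have "\<forall>\<^sub>F x in at_right a. x \<in> {a<..<b}" by (rule eventually_at_right_real[OF ab])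
      ultimately show "\<forall>\<^sub>F x in at_right a. z x < e"
      proof eventually_elim
        case (elim x)
        then have xa: "x \<in> {a<..b}" by auto
        show ?case
        proof (cases "s \<le> m")
          case True
          then have "z x \<le> zm x" using compare[OF z(1) szm _ xa] z(2) zm(3) by auto
          then show ?thesis using elim e by auto
        next
          case False
          then have "z x - zm x \<le> s - m" using compare[OF szm z(1) _ xa] z(2) zm(3) by auto
          then show ?thesis using elim mS by auto
        qed
      qed
    qed
    have em: "pos_sol_on Q H C a b (zext z 0) \<and> zext z 0 a = 0 \<and> zext z 0 b = z b" using extmem[OF z(1) z0] by blast
    have "at b within {a..b} = at b within {a<..b}"
      by (rule at_within_nhd[of b "{a<..}"]) (use ab in auto)
    then have d1: "(z has_real_derivative F C b s) (at b within {a..b})" using z(3) by simp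
    have "(zext z 0 has_real_derivative F C b s) (at b within {a..b})"
    proof (rule has_field_derivative_transform_within[OF d1, of "b - a"])
      show "0 < b - a" using ab by simp
      show "b \<in> {a..b}" using ab by simp
      fix x assume "x \<in> {a..b}" "dist x b < b - a"
      then have "x \<noteq> a" by (auto simp: dist_real_def)
      then show "z x = zext z 0 x" by (simp add: zext_def)
    qed
    then show "\<exists>z. pos_sol_on Q H C a b z \<and> z a = 0 \<and> z b = s \<and> (z has_real_derivative F C b s) (at b within {a..b})"
      using em z(2) by auto
  qed
qed

lemma upper_c:
  assumes p: "pos_sol_on Q H C a b z" and za: "z a = 0" and zb: "0 < z b"
    and zt: "zeta_sol Q (\<lambda>x. - H x) a b c' \<zeta>" and \<zeta>a: "\<zeta> a < 0"
  shows "c' \<le> - C"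
proof (rule ccontr)
  assume "\<not> c' \<le> - C"
  then have cc: "0 < c' + C" by simp
  have s: "sol C z" by (rule pos_sol_sol[OF p])
  have zc: "continuous_on {a..b} \<zeta>" and zC1: "C1_on {a<..<b} \<zeta>"
    and zd: "\<forall>x\<in>{a<..<b}. deriv \<zeta> x = - H x - c' - Q x / \<zeta> x \<and> \<zeta> x < 0" and zb0: "\<zeta> b = 0"
    using zt unfolding zeta_sol_def by auto
  define d where "d t = \<zeta> t + z t" for t
  define d' where "d' t = (- H t - c' - Q t / \<zeta> t) + F C t (z t)" for t
  have cd: "continuous_on {a..b} d" unfolding d_def using zc p unfolding pos_sol_on_def
    by (intro continuous_intros) auto
  have dd: "(d has_real_derivative d' t) (at t)" if t: "t \<in> {a<..<b}" for t
  proof -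
    have "(\<zeta> has_real_derivative (- H t - c' - Q t / \<zeta> t)) (at t)" using C1D[OF zC1 t] zd t by auto
    moreover have "(z has_real_derivative F C t (z t)) (at t)" using s t unfolding sol_def by auto
    ultimately show ?thesis unfolding d_def d'_def by (auto intro!: derivative_intros)
  qed
  have d'neg: "d' t < 0" if t: "t \<in> {a<..<b}" and dt: "d t \<le> 0" for t
  proof -
    have p1: "\<zeta> t < 0" "0 < z t" using zd s t unfolding sol_def by auto
    have "d' t = - (c' + C) + Q t * d t / (- \<zeta> t * z t)"
      unfolding d'_def d_def F_def using p1 by (simp add: field_simps)
    moreover have "Q t * d t / (- \<zeta> t * z t) \<le> 0"
    proof -
      have "Q t * d t \<le> 0" using Qnn[of t] t dt by (intro mult_nonneg_nonpos) auto
      moreover have "0 < - \<zeta> t * z t" using p1 by (intro mult_pos_pos) auto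
      ultimately show ?thesis by (rule divide_nonpos_pos)
    qed
    ultimately show ?thesis using cc by simp
  qed
  have dpos: "0 < d y" if y: "y \<in> {a<..<b}" for y
  proof (rule ccontr)
    assume "\<not> 0 < d y"
    then have dy: "d y \<le> 0" by simp
    have "\<forall>t\<in>{y..b}. d t \<le> d y"
    proof (rule first_exit_strict[where u'=d' and P="\<lambda>t. d t \<le> 0"])
      show "y \<le> b" using y by simp
      show "continuous_on {y..b} d" using cd y by (auto elim: continuous_on_subset)
    next
      fix t assume "t \<in> {y..<b}"
      then have "t \<in> {a<..<b}" using y by auto
      then show "(d has_real_derivative d' t) (at t)" by (rule dd)
    next
      fix t assume t: "t \<in> {y..<b}" "d t \<le> 0"
      then have "t \<in> {a<..<b}" using y by auto
      then show "d' t < 0" using d'neg t(2) by blast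
    next
      fix t assume "t \<in> {y..b}" "d t \<le> d y"
      then show "d t \<le> 0" using dy by simp
    qed
    then have "d b \<le> d y" using y by auto
    moreover have "d b = z b" unfolding d_def using zb0 by simp
    ultimately show False using dy zb by simp
  qed
  have "(d \<longlongrightarrow> d a) (at_right a)"
    using cd ab unfolding continuous_on_def by (metis at_within_Icc_at_right atLeastAtMost_iff order.refl less_imp_le)
  moreover have "\<forall>\<^sub>F x in at_right a. 0 \<le> d x"
    using eventually_at_right_real[OF ab] by (rule eventually_mono) (use dpos in \<open>auto simp: less_imp_le\<close>)
  ultimately have "0 \<le> d a" by (rule tendsto_lowerbound) simp
  moreover have "d a = \<zeta> a" unfolding d_def using za by simp
  ultimately show False using \<zeta>a by simp
qed

end

lemma pos_sol_restrict:
  assumes p: "pos_sol_on q h c a b z" and s: "a \<le> a'" "a' < b'" "b' \<le> b"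
  shows "pos_sol_on q h c a' b' z"
proof -
  have "continuous_on {a'..b'} z" using p s unfolding pos_sol_on_def by (auto elim: continuous_on_subset)
  moreover have "C1_on {a'<..<b'} z"
    using p s unfolding pos_sol_on_def C1_on_def by (auto elim: continuous_on_subset)
  moreover have "\<forall>x\<in>{a'<..<b'}. deriv z x = h x - c - q x / z x \<and> z x > 0"
    using p s unfolding pos_sol_on_def by auto
  ultimately show ?thesis unfolding pos_sol_on_def by blast
qed

lemma pos_sol_reflect:
  assumes p: "pos_sol_on q h c a b z"
  shows "pos_sol_on (\<lambda>\<phi>. - q (1 - \<phi>)) (\<lambda>\<phi>. - h (1 - \<phi>)) (- c) (1 - b) (1 - a) (\<lambda>\<phi>. z (1 - \<phi>))"
proof -
  have zc: "continuous_on {a..b} z" and C1: "C1_on {a<..<b} z"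
    and zd: "\<forall>x\<in>{a<..<b}. deriv z x = h x - c - q x / z x \<and> z x > 0"
    using p unfolding pos_sol_on_def by auto
  have c1: "continuous_on {1-b..1-a} (\<lambda>\<phi>. z (1 - \<phi>))"
    by (rule continuous_on_compose2[OF zc]) (auto intro!: continuous_intros)
  have d: "((\<lambda>\<phi>. z (1 - \<phi>)) has_real_derivative - deriv z (1 - \<phi>)) (at \<phi>)" if "\<phi> \<in> {1-b<..<1-a}" for \<phi>
  proof -
    have x: "1 - \<phi> \<in> {a<..<b}" using that by auto
    have "((\<lambda>\<phi>. z (1 - \<phi>)) has_real_derivative deriv z (1 - \<phi>) * (0 - 1)) (at \<phi>)"
      by (rule DERIV_chain2[where f=z and g="\<lambda>\<phi>. 1 - \<phi>", OF C1D[OF C1 x]]) (auto intro!: derivative_eq_intros)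
    then show ?thesis by simp
  qed
  have dc: "continuous_on {1-b<..<1-a} (\<lambda>\<phi>. - deriv z (1 - \<phi>))"
  proof -
    have "continuous_on {a<..<b} (deriv z)" using C1 unfolding C1_on_def by auto
    then have "continuous_on {1-b<..<1-a} (\<lambda>\<phi>. deriv z (1 - \<phi>))"
      by (rule continuous_on_compose2) (auto intro!: continuous_intros)
    then show ?thesis by (intro continuous_intros)
  qed
  have C1': "C1_on {1-b<..<1-a} (\<lambda>\<phi>. z (1 - \<phi>))"
    and dv: "\<And>\<phi>. \<phi> \<in> {1-b<..<1-a} \<Longrightarrow> deriv (\<lambda>\<phi>. z (1 - \<phi>)) \<phi> = - deriv z (1 - \<phi>)"
    using C1I[of "1-b" "1-a" "\<lambda>\<phi>. z (1 - \<phi>)" "\<lambda>\<phi>. - deriv z (1 - \<phi>)", OF d dc] by auto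
  have "\<forall>\<phi>\<in>{1-b<..<1-a}. deriv (\<lambda>\<phi>. z (1 - \<phi>)) \<phi> = - h (1 - \<phi>) - - c - - q (1 - \<phi>) / z (1 - \<phi>) \<and> z (1 - \<phi>) > 0"
  proof
    fix \<phi> assume ph: "\<phi> \<in> {1-b<..<1-a}"
    then have x: "1 - \<phi> \<in> {a<..<b}" by auto
    show "deriv (\<lambda>\<phi>. z (1 - \<phi>)) \<phi> = - h (1 - \<phi>) - - c - - q (1 - \<phi>) / z (1 - \<phi>) \<and> z (1 - \<phi>) > 0"
      using dv[OF ph] zd x by (auto simp: field_simps)
  qed
  then show ?thesis unfolding pos_sol_on_def using c1 C1' by blast
qed

lemma pos_sol_reflect_back:
  assumes p: "pos_sol_on (\<lambda>\<phi>. - q (1 - \<phi>)) (\<lambda>\<phi>. - h (1 - \<phi>)) (- c) (1 - b) (1 - a) y"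
  shows "pos_sol_on q h c a b (\<lambda>x. y (1 - x))"
  using pos_sol_reflect[OF p] by simp

lemma D_alpha_zero:
  fixes D D' :: "real \<Rightarrow> real"
  assumes "0 < \<alpha>" "\<alpha> < 1"
    and D_C1: "\<forall>x\<in>{0..1}. (D has_real_derivative D' x) (at x within {0..1})"
    and D_pos: "\<forall>x\<in>{0<..<\<alpha>}. D x > 0" and D_neg: "\<forall>x\<in>{\<alpha><..<1}. D x < 0"
  shows "D \<alpha> = 0" "continuous_on {0..1} D"
proof -
  show Dc: "continuous_on {0..1} D" using D_C1 by (intro DERIV_continuous_on) auto
  have "isCont D \<alpha>" using Dc assms(1,2) by (intro continuous_on_interior[of "{0..1}"]) auto
  then have lim: "(D \<longlongrightarrow> D \<alpha>) (at \<alpha>)" by (simp add: isCont_def)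
  have "D \<alpha> \<le> 0"
  proof (rule tendsto_upperbound)
    show "(D \<longlongrightarrow> D \<alpha>) (at_right \<alpha>)" using lim by (rule tendsto_mono[OF at_le, rotated]) simp
    show "\<forall>\<^sub>F x in at_right \<alpha>. D x \<le> 0"
      using eventually_at_right_real[OF assms(2)] by (rule eventually_mono) (use D_neg in \<open>auto simp: less_imp_le\<close>)
  qed simp
  moreover have "0 \<le> D \<alpha>"
  proof (rule tendsto_lowerbound)
    show "(D \<longlongrightarrow> D \<alpha>) (at_left \<alpha>)" using lim by (rule tendsto_mono[OF at_le, rotated]) simp
    show "\<forall>\<^sub>F x in at_left \<alpha>. 0 \<le> D x"
      using eventually_at_left_real[OF assms(1)] by (rule eventually_mono) (use D_pos in \<open>auto simp: less_imp_le\<close>)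
  qed simp
  ultimately show "D \<alpha> = 0" by simp
qed


lemma image_reflect: "(\<lambda>x::real. 1 - x) ` {g..1} = {0..1-g}"
proof (rule set_eqI)
  fix p :: real
  show "p \<in> (\<lambda>x. 1 - x) ` {g..1} \<longleftrightarrow> p \<in> {0..1-g}"
  proof
    assume "p \<in> (\<lambda>x. 1 - x) ` {g..1}" then show "p \<in> {0..1-g}" by auto
  next
    assume p: "p \<in> {0..1-g}"
    then have "1 - p \<in> {g..1}" by auto
    moreover have "p = 1 - (1 - p)" by simp
    ultimately show "p \<in> (\<lambda>x. 1 - x) ` {g..1}" by (rule rev_image_eqI)
  qed
qed

lemma glue:
  fixes q h z1 z2 :: "real \<Rightarrow> real"
  assumes ag: "\<alpha> < \<gamma>" "\<gamma> < 1" and s: "0 < s"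
    and hc: "continuous_on {\<alpha>..1} h" and qc: "continuous_on {\<alpha>..1} q"
    and z1: "pos_sol_on q h c \<alpha> \<gamma> z1" "z1 \<alpha> = 0" "z1 \<gamma> = s"
      "(z1 has_real_derivative h \<gamma> - c - q \<gamma> / s) (at \<gamma> within {\<alpha>..\<gamma>})"
    and z2: "pos_sol_on q h c \<gamma> 1 z2" "z2 1 = 0" "z2 \<gamma> = s"
      "(z2 has_real_derivative h \<gamma> - c - q \<gamma> / s) (at \<gamma> within {\<gamma>..1})"
  shows "P3 q h \<alpha> c (\<lambda>x. if x \<le> \<gamma> then z1 x else z2 x) \<and> (\<lambda>x. if x \<le> \<gamma> then z1 x else z2 x) \<gamma> = s"
proof -
  define z where "z x = (if x \<le> \<gamma> then z1 x else z2 x)" for x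
  have c1: "continuous_on {\<alpha>..\<gamma>} z1" and C11: "C1_on {\<alpha><..<\<gamma>} z1"
    and d1: "\<forall>x\<in>{\<alpha><..<\<gamma>}. deriv z1 x = h x - c - q x / z1 x \<and> z1 x > 0"
    using z1(1) unfolding pos_sol_on_def by auto
  have c2: "continuous_on {\<gamma>..1} z2" and C12: "C1_on {\<gamma><..<1} z2"
    and d2: "\<forall>x\<in>{\<gamma><..<1}. deriv z2 x = h x - c - q x / z2 x \<and> z2 x > 0"
    using z2(1) unfolding pos_sol_on_def by auto
  have zc: "continuous_on {\<alpha>..1} z"
  proof -
    have "continuous_on {\<alpha>..1} (\<lambda>x. if id x \<le> \<gamma> then z1 x else z2 x)"
    proof (rule continuous_on_cases_le)
      have "{x \<in> {\<alpha>..1}. id x \<le> \<gamma>} = {\<alpha>..\<gamma>}" using ag by auto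
      then show "continuous_on {x \<in> {\<alpha>..1}. id x \<le> \<gamma>} z1" using c1 by simp
      have "{x \<in> {\<alpha>..1}. \<gamma> \<le> id x} = {\<gamma>..1}" using ag by auto
      then show "continuous_on {x \<in> {\<alpha>..1}. \<gamma> \<le> id x} z2" using c2 by simp
      show "continuous_on {\<alpha>..1} id" unfolding id_def by (rule continuous_on_id)
      fix x assume "x \<in> {\<alpha>..1}" "id x = \<gamma>"
      then show "z1 x = z2 x" using z1(3) z2(3) by simp
    qed
    then show ?thesis unfolding z_def by simp
  qed
  have pos: "0 < z x" if x: "x \<in> {\<alpha><..<1}" for x
    using d1 d2 x s z1(3) unfolding z_def by (cases "x < \<gamma>"; cases "x = \<gamma>") auto
  have der: "(z has_real_derivative h x - c - q x / z x) (at x)" if x: "x \<in> {\<alpha><..<1}" for x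
  proof (cases "x < \<gamma>")
    case True
    then have x1: "x \<in> {\<alpha><..<\<gamma>}" using x by auto
    have "(z1 has_real_derivative h x - c - q x / z1 x) (at x)" using C1D[OF C11 x1] d1 x1 by auto
    then have "(z has_real_derivative h x - c - q x / z1 x) (at x)"
      by (rule has_field_derivative_transform_within_open[of _ _ _ "{\<alpha><..<\<gamma>}"]) (use x1 in \<open>auto simp: z_def\<close>)
    then show ?thesis using True by (simp add: z_def)
  next
    case False
    show ?thesis
    proof (cases "x = \<gamma>")
      case True
      have e1: "(z has_real_derivative h \<gamma> - c - q \<gamma> / s) (at \<gamma> within {\<alpha>..\<gamma>})"
        by (rule has_field_derivative_transform_within[OF z1(4), of 1]) (use ag in \<open>auto simp: z_def\<close>)
      have e2: "(z has_real_derivative h \<gamma> - c - q \<gamma> / s) (at \<gamma> within {\<gamma>..1})"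
        by (rule has_field_derivative_transform_within[OF z2(4), of 1]) (use ag z1(3) z2(3) in \<open>auto simp: z_def\<close>)
      have "(z has_real_derivative h \<gamma> - c - q \<gamma> / s) (at \<gamma> within {\<alpha>..\<gamma>} \<union> {\<gamma>..1})"
        using e1 e2 unfolding has_field_derivative_iff by (rule Lim_within_Un[THEN iffD2, OF conjI])
      moreover have "{\<alpha>..\<gamma>} \<union> {\<gamma>..1} = {\<alpha>..1}" using ag by auto
      ultimately have "(z has_real_derivative h \<gamma> - c - q \<gamma> / s) (at \<gamma> within {\<alpha>..1})" by simp
      then have "(z has_real_derivative h \<gamma> - c - q \<gamma> / s) (at \<gamma>)"
        by (rule deriv_within_int) (use ag in auto)
      then show ?thesis using True z1(3) by (simp add: z_def)
    next
      case False2: False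
      then have x2: "x \<in> {\<gamma><..<1}" using x False by auto
      have "(z2 has_real_derivative h x - c - q x / z2 x) (at x)" using C1D[OF C12 x2] d2 x2 by auto
      then have "(z has_real_derivative h x - c - q x / z2 x) (at x)"
        by (rule has_field_derivative_transform_within_open[of _ _ _ "{\<gamma><..<1}"]) (use x2 in \<open>auto simp: z_def\<close>)
      then show ?thesis using x2 by (simp add: z_def)
    qed
  qed
  have dc: "continuous_on {\<alpha><..<1} (\<lambda>x. h x - c - q x / z x)"
  proof -
    have "continuous_on {\<alpha><..<1} z" "continuous_on {\<alpha><..<1} h" "continuous_on {\<alpha><..<1} q"
      using zc hc qc by (auto elim: continuous_on_subset)
    moreover have "\<forall>x\<in>{\<alpha><..<1}. z x \<noteq> 0" using pos by force
    ultimately show ?thesis by (intro continuous_intros) auto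
  qed
  have C1: "C1_on {\<alpha><..<1} z" "\<And>x. x \<in> {\<alpha><..<1} \<Longrightarrow> deriv z x = h x - c - q x / z x"
    using C1I[of \<alpha> 1 z "\<lambda>x. h x - c - q x / z x", OF der dc] by auto
  have "pos_sol_on q h c \<alpha> 1 z" unfolding pos_sol_on_def using zc C1 pos by auto
  moreover have "z \<alpha> = 0" "z 1 = 0" "z \<gamma> = s" using ag z1(2,3) z2(2) unfolding z_def by auto
  ultimately show ?thesis unfolding P3_def z_def[abs_def] by auto
qed


theorem lemma4p9:
  fixes \<alpha> \<gamma> :: real and f h D D' g q :: "real \<Rightarrow> real"
  assumes "0 < \<alpha>" "\<alpha> < \<gamma>" "\<gamma> < 1"
    and f_C1: "\<forall>x\<in>{0..1}. (f has_real_derivative h x) (at x within {0..1})"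
    and h_cont: "continuous_on {0..1} h"
    and f0: "f 0 = 0"
    and D_C1: "\<forall>x\<in>{0..1}. (D has_real_derivative D' x) (at x within {0..1})"
    and D'_cont: "continuous_on {0..1} D'"
    and D_pos: "\<forall>x\<in>{0<..<\<alpha>}. D x > 0"
    and D_neg: "\<forall>x\<in>{\<alpha><..<1}. D x < 0"
    and g_cont: "continuous_on {0..1} g"
    and g_neg: "\<forall>x\<in>{0<..<\<gamma>}. g x < 0"
    and g_pos: "\<forall>x\<in>{\<gamma><..<1}. g x > 0"
    and g_zeros: "g 0 = 0" "g \<gamma> = 0" "g 1 = 0"
    and q_def: "q = (\<lambda>x. D x * g x)"
  shows "(\<forall>c::real. cstar32 q h \<gamma> < cstar31 q h \<alpha> \<gamma> \<and>
            cstar32 q h \<gamma> < ereal c \<and> ereal c < cstar31 q h \<alpha> \<gamma> \<longrightarrow>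
            (\<exists>z. P3 q h \<alpha> c z) \<and>
            (\<forall>s\<in>{0<..min (beta1 q h \<alpha> \<gamma> c) (beta2 q h \<gamma> c)}.
               \<exists>z. P3 q h \<alpha> c z \<and> z \<gamma> = s))
       \<and> (\<forall>c::real. (\<exists>z. P3 q h \<alpha> c z) \<longrightarrow>
            cstar32 q h \<gamma> \<le> cstar31 q h \<alpha> \<gamma> \<and>
            cstar32 q h \<gamma> \<le> ereal c \<and> ereal c \<le> cstar31 q h \<alpha> \<gamma>)"
proof -
  have a1: "\<alpha> < 1" using assms(2,3) by simp
  obtain D\<alpha>: "D \<alpha> = 0" and Dc: "continuous_on {0..1} D"
    using D_alpha_zero[OF assms(1) a1 D_C1 D_pos D_neg] by blast
  have qc: "continuous_on {0..1} q" unfolding q_def using Dc g_cont by (intro continuous_intros)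
  have qx: "q x = D x * g x" for x unfolding q_def by simp
  have q1pos: "0 < q x" if "x \<in> {\<alpha><..<\<gamma>}" for x
  proof -
    have "D x < 0" using D_neg that assms(3) by auto
    moreover have "g x < 0" using g_neg that assms(1) by auto
    ultimately show ?thesis unfolding qx by (simp add: mult_neg_neg)
  qed
  have q2neg: "q x < 0" if "x \<in> {\<gamma><..<1}" for x
  proof -
    have "D x < 0" using D_neg that assms(2) by auto
    moreover have "g x > 0" using g_pos that by auto
    ultimately show ?thesis unfolding qx by (simp add: mult_neg_pos)
  qed
  have q\<alpha>: "q \<alpha> = 0" unfolding qx using D\<alpha> by simp
  have q\<gamma>: "q \<gamma> = 0" unfolding qx using g_zeros by simp
  have q1: "q 1 = 0" unfolding qx using g_zeros by simp
  interpret I1: gen \<alpha> \<gamma> q h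
  proof
    show "\<alpha> < \<gamma>" using assms(2) .
    show "continuous_on {\<alpha>..\<gamma>} q" using qc assms by (auto elim: continuous_on_subset)
    show "continuous_on {\<alpha>..\<gamma>} h" using h_cont assms by (auto elim: continuous_on_subset)
    show "\<And>x. x \<in> {\<alpha><..<\<gamma>} \<Longrightarrow> 0 < q x" by (rule q1pos)
    fix x assume x: "x \<in> {\<alpha>..\<gamma>}"
    show "0 \<le> q x"
    proof (cases "x = \<alpha> \<or> x = \<gamma>")
      case True then show ?thesis using q\<alpha> q\<gamma> by auto
    next
      case False then have "x \<in> {\<alpha><..<\<gamma>}" using x by auto
      then show ?thesis using q1pos by (simp add: less_imp_le)
    qed
  qed
  have g1: "0 < 1 - \<gamma>" using assms(3) by simp
  interpret I2: gen 0 "1 - \<gamma>" "\<lambda>\<phi>. - q (1 - \<phi>)" "\<lambda>\<phi>. - h (1 - \<phi>)"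
  proof
    show "0 < 1 - \<gamma>" by (rule g1)
    show "continuous_on {0..1-\<gamma>} (\<lambda>\<phi>. - q (1 - \<phi>))"
      by (intro continuous_intros continuous_on_compose2[OF qc]) (use assms in auto)
    show "continuous_on {0..1-\<gamma>} (\<lambda>\<phi>. - h (1 - \<phi>))"
      by (intro continuous_intros continuous_on_compose2[OF h_cont]) (use assms in auto)
    show "\<And>x. x \<in> {0<..<1-\<gamma>} \<Longrightarrow> 0 < - q (1 - x)"
    proof -
      fix x assume "x \<in> {0<..<1-\<gamma>}"
      then have "1 - x \<in> {\<gamma><..<1}" by auto
      then show "0 < - q (1 - x)" using q2neg by simp
    qed
    fix x assume x: "x \<in> {0..1-\<gamma>}"
    show "0 \<le> - q (1 - x)"
    proof (cases "x = 0 \<or> x = 1 - \<gamma>")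
      case True then show ?thesis using q1 q\<gamma> by auto
    next
      case False then have "1 - x \<in> {\<gamma><..<1}" using x by auto
      then show ?thesis using q2neg by (simp add: less_imp_le)
    qed
  qed
  have S2eq: "{z \<gamma> |z. pos_sol_on q h c \<gamma> 1 z \<and> z 1 = 0} =
     {z (1 - \<gamma>) |z. pos_sol_on (\<lambda>\<phi>. - q (1 - \<phi>)) (\<lambda>\<phi>. - h (1 - \<phi>)) (- c) 0 (1 - \<gamma>) z \<and> z 0 = 0}" for c
  proof (rule set_eqI, rule iffI)
    fix v assume "v \<in> {z \<gamma> |z. pos_sol_on q h c \<gamma> 1 z \<and> z 1 = 0}"
    then obtain z where z: "pos_sol_on q h c \<gamma> 1 z" "z 1 = 0" "v = z \<gamma>" by blast
    have "pos_sol_on (\<lambda>\<phi>. - q (1 - \<phi>)) (\<lambda>\<phi>. - h (1 - \<phi>)) (- c) (1 - 1) (1 - \<gamma>) (\<lambda>\<phi>. z (1 - \<phi>))"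
      by (rule pos_sol_reflect[OF z(1)])
    then have "pos_sol_on (\<lambda>\<phi>. - q (1 - \<phi>)) (\<lambda>\<phi>. - h (1 - \<phi>)) (- c) 0 (1 - \<gamma>) (\<lambda>\<phi>. z (1 - \<phi>))" by simp
    then show "v \<in> {z (1 - \<gamma>) |z. pos_sol_on (\<lambda>\<phi>. - q (1 - \<phi>)) (\<lambda>\<phi>. - h (1 - \<phi>)) (- c) 0 (1 - \<gamma>) z \<and> z 0 = 0}"
      unfolding mem_Collect_eq by (intro exI[where x="\<lambda>\<phi>. z (1 - \<phi>)"]) (use z in simp)
  next
    fix v assume "v \<in> {z (1 - \<gamma>) |z. pos_sol_on (\<lambda>\<phi>. - q (1 - \<phi>)) (\<lambda>\<phi>. - h (1 - \<phi>)) (- c) 0 (1 - \<gamma>) z \<and> z 0 = 0}"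
    then obtain y where y: "pos_sol_on (\<lambda>\<phi>. - q (1 - \<phi>)) (\<lambda>\<phi>. - h (1 - \<phi>)) (- c) 0 (1 - \<gamma>) y" "y 0 = 0" "v = y (1 - \<gamma>)" by blast
    have "pos_sol_on (\<lambda>\<phi>. - q (1 - \<phi>)) (\<lambda>\<phi>. - h (1 - \<phi>)) (- c) (1 - 1) (1 - \<gamma>) y" using y(1) by simp
    then have "pos_sol_on q h c \<gamma> 1 (\<lambda>x. y (1 - x))" by (rule pos_sol_reflect_back)
    then show "v \<in> {z \<gamma> |z. pos_sol_on q h c \<gamma> 1 z \<and> z 1 = 0}"
      unfolding mem_Collect_eq by (intro exI[where x="\<lambda>x. y (1 - x)"]) (use y in simp)
  qed
  have hbar: "(\<lambda>x. - (- h (1 - x))) = (\<lambda>\<phi>. h (1 - \<phi>))" by simp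
  show ?thesis
  proof (intro conjI allI impI)
    fix c :: real
    assume hyp: "cstar32 q h \<gamma> < cstar31 q h \<alpha> \<gamma> \<and> cstar32 q h \<gamma> < ereal c \<and> ereal c < cstar31 q h \<alpha> \<gamma>"
    obtain C2 where C2: "ereal c < ereal C2" "ereal C2 < cstar31 q h \<alpha> \<gamma>" using ereal_dense2 hyp by blast
    have nz1: "\<not> (\<exists>\<zeta>. zeta_sol q (\<lambda>x. - h x) \<alpha> \<gamma> (- C2) \<zeta> \<and> \<zeta> \<alpha> < 0)"
    proof
      assume "\<exists>\<zeta>. zeta_sol q (\<lambda>x. - h x) \<alpha> \<gamma> (- C2) \<zeta> \<and> \<zeta> \<alpha> < 0"
      then have "ereal (- C2) \<le> cstar q (\<lambda>x. - h x) \<alpha> \<gamma>" unfolding cstar_def by (intro Sup_upper) blast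
      then have "- cstar q (\<lambda>x. - h x) \<alpha> \<gamma> \<le> - ereal (- C2)" by (simp only: ereal_minus_le_minus)
      then have "cstar31 q h \<alpha> \<gamma> \<le> ereal C2" unfolding cstar31_def by simp
      then show False using C2 by simp
    qed
    have cC2: "c < C2" using C2 by simp
    note E1 = I1.main_exist[OF cC2 nz1]
    obtain c2 where c2: "cstar32 q h \<gamma> < ereal c2" "ereal c2 < ereal c" using ereal_dense2 hyp by blast
    have nz2: "\<not> (\<exists>\<zeta>. zeta_sol (\<lambda>\<phi>. - q (1 - \<phi>)) (\<lambda>x. - (- h (1 - x))) 0 (1 - \<gamma>) (- (- c2)) \<zeta> \<and> \<zeta> 0 < 0)"
    proof
      assume "\<exists>\<zeta>. zeta_sol (\<lambda>\<phi>. - q (1 - \<phi>)) (\<lambda>x. - (- h (1 - x))) 0 (1 - \<gamma>) (- (- c2)) \<zeta> \<and> \<zeta> 0 < 0"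
      then have "\<exists>\<zeta>. zeta_sol (\<lambda>\<phi>. - q (1 - \<phi>)) (\<lambda>\<phi>. h (1 - \<phi>)) 0 (1 - \<gamma>) c2 \<zeta> \<and> \<zeta> 0 < 0" by simp
      then have "ereal c2 \<le> cstar32 q h \<gamma>" unfolding cstar32_def cstar_def by (intro Sup_upper) blast
      then show False using c2 by simp
    qed
    have cc2: "- c < - c2" using c2 by simp
    note E2 = I2.main_exist[OF cc2 nz2]
    define S1 where "S1 = {z \<gamma> |z. pos_sol_on q h c \<alpha> \<gamma> z \<and> z \<alpha> = 0}"
    define S2 where "S2 = {z (1 - \<gamma>) |z. pos_sol_on (\<lambda>\<phi>. - q (1 - \<phi>)) (\<lambda>\<phi>. - h (1 - \<phi>)) (- c) 0 (1 - \<gamma>) z \<and> z 0 = 0}"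
    have b1: "beta1 q h \<alpha> \<gamma> c = Sup S1" unfolding beta1_def S1_def ..
    have b2: "beta2 q h \<gamma> c = Sup S2" unfolding beta2_def S2_def S2eq ..
    have fam: "\<exists>z. P3 q h \<alpha> c z \<and> z \<gamma> = s" if s: "s \<in> {0<..min (beta1 q h \<alpha> \<gamma> c) (beta2 q h \<gamma> c)}" for s
    proof -
      have s1: "s \<in> {0<..Sup S1}" and s2: "s \<in> {0<..Sup S2}" using s b1 b2 by auto
      obtain z1 where z1: "pos_sol_on q h c \<alpha> \<gamma> z1" "z1 \<alpha> = 0" "z1 \<gamma> = s"
        "(z1 has_real_derivative I1.F c \<gamma> s) (at \<gamma> within {\<alpha>..\<gamma>})"
        using E1(3) s1 unfolding S1_def by blast
      obtain y where y: "pos_sol_on (\<lambda>\<phi>. - q (1 - \<phi>)) (\<lambda>\<phi>. - h (1 - \<phi>)) (- c) 0 (1 - \<gamma>) y" "y 0 = 0" "y (1 - \<gamma>) = s"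
        "(y has_real_derivative I2.F (- c) (1 - \<gamma>) s) (at (1 - \<gamma>) within {0..1 - \<gamma>})"
        using E2(3) s2 unfolding S2_def by blast
      have "pos_sol_on (\<lambda>\<phi>. - q (1 - \<phi>)) (\<lambda>\<phi>. - h (1 - \<phi>)) (- c) (1 - 1) (1 - \<gamma>) y" using y(1) by simp
      then have z2: "pos_sol_on q h c \<gamma> 1 (\<lambda>x. y (1 - x))" by (rule pos_sol_reflect_back)
      have "(y \<circ> (\<lambda>x. 1 - x) has_real_derivative I2.F (- c) (1 - \<gamma>) s * (- 1)) (at \<gamma> within {\<gamma>..1})"
      proof (rule DERIV_image_chain)
        show "(y has_real_derivative I2.F (- c) (1 - \<gamma>) s) (at (1 - \<gamma>) within (\<lambda>x. 1 - x) ` {\<gamma>..1})"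
          using y(4) by (simp add: image_reflect)
        show "((\<lambda>x. 1 - x) has_real_derivative - 1) (at \<gamma> within {\<gamma>..1})"
          by (auto intro!: derivative_eq_intros)
      qed
      moreover have "I2.F (- c) (1 - \<gamma>) s * (- 1) = h \<gamma> - c - q \<gamma> / s" unfolding I2.F_def by simp
      ultimately have dz2: "((\<lambda>x. y (1 - x)) has_real_derivative h \<gamma> - c - q \<gamma> / s) (at \<gamma> within {\<gamma>..1})"
        by (simp add: o_def)
      have dz1: "(z1 has_real_derivative h \<gamma> - c - q \<gamma> / s) (at \<gamma> within {\<alpha>..\<gamma>})"
        using z1(4) unfolding I1.F_def .
      have hc': "continuous_on {\<alpha>..1} h" "continuous_on {\<alpha>..1} q"
        using h_cont qc assms by (auto elim: continuous_on_subset)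
      have "P3 q h \<alpha> c (\<lambda>x. if x \<le> \<gamma> then z1 x else y (1 - x)) \<and> (\<lambda>x. if x \<le> \<gamma> then z1 x else y (1 - x)) \<gamma> = s"
        by (rule glue[OF assms(2,3) _ hc'(1) hc'(2) z1(1,2,3) dz1 z2 _ _ dz2]) (use s y(2,3) in auto)
      then show ?thesis by blast
    qed
    have B1: "0 < Sup S1"
    proof -
      obtain v where v: "v \<in> S1" "0 < v" using E1(2) unfolding S1_def by blast
      have "v \<le> Sup S1" using E1(1) v(1) unfolding S1_def by (intro cSup_upper) auto
      then show ?thesis using v by simp
    qed
    have B2: "0 < Sup S2"
    proof -
      obtain v where v: "v \<in> S2" "0 < v" using E2(2) unfolding S2_def by blast
      have "v \<le> Sup S2" using E2(1) v(1) unfolding S2_def by (intro cSup_upper) auto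
      then show ?thesis using v by simp
    qed
    have "min (beta1 q h \<alpha> \<gamma> c) (beta2 q h \<gamma> c) \<in> {0<..min (beta1 q h \<alpha> \<gamma> c) (beta2 q h \<gamma> c)}"
      using B1 B2 b1 b2 by auto
    then show "\<exists>z. P3 q h \<alpha> c z" using fam by blast
    show "\<forall>s\<in>{0<..min (beta1 q h \<alpha> \<gamma> c) (beta2 q h \<gamma> c)}. \<exists>z. P3 q h \<alpha> c z \<and> z \<gamma> = s"
      using fam by blast
  next
    fix c :: real
    assume "\<exists>z. P3 q h \<alpha> c z"
    then obtain z where z: "pos_sol_on q h c \<alpha> 1 z" "z \<alpha> = 0" "z 1 = 0" unfolding P3_def by blast
    have z\<gamma>: "0 < z \<gamma>" using z(1) assms unfolding pos_sol_on_def by auto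
    have za: "pos_sol_on q h c \<alpha> \<gamma> z" by (rule pos_sol_restrict[OF z(1)]) (use assms in auto)
    have zb: "pos_sol_on q h c \<gamma> 1 z" by (rule pos_sol_restrict[OF z(1)]) (use assms in auto)
    have "cstar q (\<lambda>x. - h x) \<alpha> \<gamma> \<le> ereal (- c)"
      unfolding cstar_def
    proof (rule Sup_least)
      fix v assume "v \<in> {ereal c' |c'. \<exists>\<zeta>. zeta_sol q (\<lambda>x. - h x) \<alpha> \<gamma> c' \<zeta> \<and> \<zeta> \<alpha> < 0}"
      then obtain c' \<zeta> where v: "v = ereal c'" "zeta_sol q (\<lambda>x. - h x) \<alpha> \<gamma> c' \<zeta>" "\<zeta> \<alpha> < 0" by blast
      have "c' \<le> - c" by (rule I1.upper_c[OF za z(2) z\<gamma> v(2) v(3)])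
      then show "v \<le> ereal (- c)" using v(1) by simp
    qed
    then have "- ereal (- c) \<le> - cstar q (\<lambda>x. - h x) \<alpha> \<gamma>" by (simp only: ereal_minus_le_minus)
    then have le31: "ereal c \<le> cstar31 q h \<alpha> \<gamma>" unfolding cstar31_def by simp
    have "pos_sol_on (\<lambda>\<phi>. - q (1 - \<phi>)) (\<lambda>\<phi>. - h (1 - \<phi>)) (- c) (1 - 1) (1 - \<gamma>) (\<lambda>\<phi>. z (1 - \<phi>))"
      by (rule pos_sol_reflect[OF zb])
    then have py: "pos_sol_on (\<lambda>\<phi>. - q (1 - \<phi>)) (\<lambda>\<phi>. - h (1 - \<phi>)) (- c) 0 (1 - \<gamma>) (\<lambda>\<phi>. z (1 - \<phi>))" by simp
    have y0: "(\<lambda>\<phi>. z (1 - \<phi>)) 0 = 0" using z(3) by simp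
    have ypos: "0 < (\<lambda>\<phi>. z (1 - \<phi>)) (1 - \<gamma>)" using z\<gamma> by simp
    have le32: "cstar32 q h \<gamma> \<le> ereal c"
      unfolding cstar32_def cstar_def
    proof (rule Sup_least)
      fix v assume "v \<in> {ereal c' |c'. \<exists>\<zeta>. zeta_sol (\<lambda>\<phi>. - q (1 - \<phi>)) (\<lambda>\<phi>. h (1 - \<phi>)) 0 (1 - \<gamma>) c' \<zeta> \<and> \<zeta> 0 < 0}"
      then obtain c' \<zeta> where v: "v = ereal c'" "zeta_sol (\<lambda>\<phi>. - q (1 - \<phi>)) (\<lambda>\<phi>. h (1 - \<phi>)) 0 (1 - \<gamma>) c' \<zeta>" "\<zeta> 0 < 0" by blast
      have v2: "zeta_sol (\<lambda>\<phi>. - q (1 - \<phi>)) (\<lambda>x. - (- h (1 - x))) 0 (1 - \<gamma>) c' \<zeta>" using v(2) by simp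
      have "c' \<le> - (- c)" by (rule I2.upper_c[OF py y0 ypos v2 v(3)])
      then show "v \<le> ereal c" using v(1) by simp
    qed
    show "cstar32 q h \<gamma> \<le> cstar31 q h \<alpha> \<gamma>" using le31 le32 by (rule order.trans[rotated])
    show "cstar32 q h \<gamma> \<le> ereal c" by (rule le32)
    show "ereal c \<le> cstar31 q h \<alpha> \<gamma>" by (rule le31)
  qed
qed


end
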